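(* $U_{2,4}\oplus U_{2,4}$ is an excluded minor for $\mathcal M_2$: it is not in $\mathcal M_2$, but every proper minor of it is in $\mathcal M_2$.
   Context: An integer matrix $A$ is $\Delta$-modular if the determinant of every $\operatorname{rank}(A)\times\operatorname{rank}(A)$ submatrix has absolute value at most $\Delta$. $\mathcal M_2$ is the class of matroids isomorphic to the real vector matroid of the columns of some $2$-modular matrix. *)

theory Defs
  imports "Jordan_Normal_Form.DL_Submatrix" "Jordan_Normal_Form.Determinant"
begin

type_synonym 'a matroid = "'a set \<times> 'a set set"

definition ground :: "'a matroid \<Rightarrow> 'a set" where "ground M = fst M"
definition indep :: "'a matroid \<Rightarrow> 'a set \<Rightarrow> bool" where "indep M X \<longleftrightarrow> X \<in> snd M"

definition matroid :: "'a matroid \<Rightarrow> bool" where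
  "matroid M \<longleftrightarrow> finite (ground M) \<and> (\<forall>X. indep M X \<longrightarrow> X \<subseteq> ground M) \<and> indep M {}
     \<and> (\<forall>X Y. indep M X \<and> Y \<subseteq> X \<longrightarrow> indep M Y)
     \<and> (\<forall>X Y. indep M X \<and> indep M Y \<and> card X < card Y \<longrightarrow> (\<exists>y\<in>Y - X. indep M (insert y X)))"

definition mrank :: "'a matroid \<Rightarrow> 'a set \<Rightarrow> nat" where
  "mrank M X = Max {card Y | Y. Y \<subseteq> X \<and> indep M Y}"

definition deletion :: "'a matroid \<Rightarrow> 'a set \<Rightarrow> 'a matroid" where
  "deletion M D = (ground M - D, {X. indep M X \<and> X \<subseteq> ground M - D})"

text \<open>Contraction via the rank function: r_{M/C}(X) = r(X \<union> C) - r(C).\<close>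
definition contraction :: "'a matroid \<Rightarrow> 'a set \<Rightarrow> 'a matroid" where
  "contraction M C = (ground M - C,
     {X. X \<subseteq> ground M - C \<and> mrank M (X \<union> C) = card X + mrank M C})"

definition minor_of :: "'a matroid \<Rightarrow> 'a set \<Rightarrow> 'a set \<Rightarrow> 'a matroid" where
  "minor_of M C D = deletion (contraction M C) D"

definition matroid_iso :: "'a matroid \<Rightarrow> 'b matroid \<Rightarrow> bool" where
  "matroid_iso M N \<longleftrightarrow> (\<exists>f. bij_betw f (ground M) (ground N)
      \<and> (\<forall>X \<subseteq> ground M. indep M X \<longleftrightarrow> indep N (f ` X)))"

definition uniform_matroid :: "nat \<Rightarrow> nat \<Rightarrow> nat matroid" where
  "uniform_matroid r n = ({0..<n}, {X. X \<subseteq> {0..<n} \<and> card X \<le> r})"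

definition direct_sum :: "'a matroid \<Rightarrow> 'b matroid \<Rightarrow> ('a + 'b) matroid" where
  "direct_sum M N = (Inl ` ground M \<union> Inr ` ground N,
     {X. indep M (Inl -` X) \<and> indep N (Inr -` X) \<and> X \<subseteq> Inl ` ground M \<union> Inr ` ground N})"

definition cols_lin_indep :: "int mat \<Rightarrow> nat set \<Rightarrow> bool" where
  "cols_lin_indep A X \<longleftrightarrow> (\<forall>c :: nat \<Rightarrow> real.
      (\<forall>i < dim_row A. (\<Sum>j\<in>X. c j * real_of_int (A $$ (i, j))) = 0) \<longrightarrow> (\<forall>j\<in>X. c j = 0))"

definition vector_matroid :: "int mat \<Rightarrow> nat matroid" where
  "vector_matroid A = ({0..<dim_col A}, {X. X \<subseteq> {0..<dim_col A} \<and> cols_lin_indep A X})"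

definition mat_rank :: "int mat \<Rightarrow> nat" where
  "mat_rank A = Max {card X | X. X \<subseteq> {0..<dim_col A} \<and> cols_lin_indep A X}"

definition delta_modular :: "int \<Rightarrow> int mat \<Rightarrow> bool" where
  "delta_modular \<Delta> A \<longleftrightarrow> (\<forall>I J. I \<subseteq> {0..<dim_row A} \<and> J \<subseteq> {0..<dim_col A}
      \<and> card I = mat_rank A \<and> card J = mat_rank A \<longrightarrow> \<bar>det (submatrix A I J)\<bar> \<le> \<Delta>)"

definition in_M2 :: "'a matroid \<Rightarrow> bool" where
  "in_M2 M \<longleftrightarrow> (\<exists>A. delta_modular 2 A \<and> matroid_iso M (vector_matroid A))"

end

theory Submission
  imports Defs
begin

lemma det2: assumes B: "B \<in> carrier_mat 2 2"
  shows "det B = B$$(0,0) * B$$(1,1) - B$$(0,1) * B$$(1,0)"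
proof -
  have "det B = (\<Sum>j<2. B $$ (0,j) * cofactor B 0 j)" by (rule laplace_expansion_row[OF B], simp)
  also have "\<dots> = B $$ (0,0) * cofactor B 0 0 + B $$ (0,1) * cofactor B 0 1"
    by (simp add: numeral_2_eq_2)
  also have "cofactor B 0 0 = B $$ (1,1)"
    unfolding cofactor_def using B by (subst det_single, auto simp: mat_delete_def)
  also have "cofactor B 0 1 = - B $$ (1,0)"
    unfolding cofactor_def using B by (subst det_single, auto simp: mat_delete_def)
  finally show ?thesis by (simp add: algebra_simps)
qed

lemma det_zero_row: assumes B: "(B :: 'a :: comm_ring_1 mat) \<in> carrier_mat n n" and i: "i < n"
  and z: "\<And>j. j < n \<Longrightarrow> B $$ (i,j) = 0"
  shows "det B = 0"
  by (subst laplace_expansion_row[OF B i], simp add: z)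

lemma pick_atLeast0: "i < r \<Longrightarrow> pick {0..<r} i = i"
proof -
  assume i: "i < r"
  have "card {a \<in> {0..<r}. a < i} = i"
  proof -
    have "{a \<in> {0..<r}. a < i} = {0..<i}" using i by auto
    thus ?thesis by simp
  qed
  with pick_card_in_set[of i "{0..<r}"] i show ?thesis by simp
qed

lemma pick_lt_iff: assumes J: "finite J" and t: "t < card J"
  shows "pick J t < b \<longleftrightarrow> t < card {a \<in> J. a < b}"
proof
  assume "pick J t < b"
  hence "{a \<in> J. a < pick J t} \<subset> {a \<in> J. a < b}"
    using pick_in_set_le[OF t] by auto
  hence "card {a \<in> J. a < pick J t} < card {a \<in> J. a < b}"
    by (rule psubset_card_mono[rotated], insert J, auto)
  thus "t < card {a \<in> J. a < b}" using card_pick_le[OF t] by simp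
next
  assume tb: "t < card {a \<in> J. a < b}"
  show "pick J t < b"
  proof (rule ccontr)
    assume "\<not> pick J t < b"
    hence "{a \<in> J. a < b} \<subseteq> {a \<in> J. a < pick J t}" by auto
    hence "card {a \<in> J. a < b} \<le> card {a \<in> J. a < pick J t}" by (rule card_mono[rotated], insert J, auto)
    thus False using card_pick_le[OF t] tb by simp
  qed
qed

lemma dep_det0:
  assumes J: "J \<subseteq> {0..<dim_col A}"
  and dep: "\<not> cols_lin_indep A J"
  shows "det (submatrix A I J) = 0"
proof (cases "dim_row (submatrix A I J) = dim_col (submatrix A I J)")
  case False
  thus ?thesis unfolding det_def by auto
next
  case True
  define k where "k = card J"
  have finJ: "finite J" using J finite_subset by blast
  have cJ: "{j. j < dim_col A \<and> j \<in> J} = J" using J by auto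
  have dc: "dim_col (submatrix A I J) = k" unfolding dim_submatrix cJ k_def ..
  have dr: "dim_row (submatrix A I J) = k" using True dc by simp
  let ?S = "map_mat real_of_int (submatrix A I J)"
  have S: "?S \<in> carrier_mat k k" using dc dr by auto
  from dep have "\<exists>c :: nat \<Rightarrow> real. (\<forall>i < dim_row A. (\<Sum>j\<in>J. c j * real_of_int (A $$ (i, j))) = 0) \<and> (\<exists>j\<in>J. c j \<noteq> 0)"
    unfolding cols_lin_indep_def by simp
  then obtain c :: "nat \<Rightarrow> real" and j0 where
    c: "\<And>i. i < dim_row A \<Longrightarrow> (\<Sum>j\<in>J. c j * real_of_int (A $$ (i, j))) = 0"
    and j0: "j0 \<in> J" and cj0: "c j0 \<noteq> 0" by blast
  have bij: "bij_betw (pick J) {..<k} J"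
  proof -
    have "inj_on (pick J) {..<k}"
    proof (rule inj_onI)
      fix x y assume x: "x \<in> {..<k}" and y: "y \<in> {..<k}" and e: "pick J x = pick J y"
      show "x = y"
      proof (rule linorder_cases[of x y])
        assume "x < y" thus ?thesis using pick_mono_le[of y J x] y e k_def by auto
      next
        assume "y < x" thus ?thesis using pick_mono_le[of x J y] x e k_def by auto
      qed
    qed
    moreover have "pick J ` {..<k} = J"
    proof
      show "pick J ` {..<k} \<subseteq> J" using pick_in_set_le k_def by auto
      show "J \<subseteq> pick J ` {..<k}"
      proof
        fix j assume j: "j \<in> J"
        have "card {a\<in>J. a < j} < k"
          unfolding k_def by (rule psubset_card_mono[OF finJ], insert j, auto)
        thus "j \<in> pick J ` {..<k}" using pick_card_in_set[OF j] by force
      qed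
    qed
    ultimately show ?thesis unfolding bij_betw_def by auto
  qed
  define v where "v = vec k (\<lambda>t. c (pick J t))"
  have v: "v \<in> carrier_vec k" unfolding v_def by auto
  have v0: "v \<noteq> 0\<^sub>v k"
  proof
    assume "v = 0\<^sub>v k"
    obtain t where t: "t < k" "pick J t = j0" using bij j0 unfolding bij_betw_def by (metis imageE lessThan_iff)
    hence "v $ t = c j0" unfolding v_def by auto
    with \<open>v = 0\<^sub>v k\<close> t cj0 show False by auto
  qed
  have Sv: "?S *\<^sub>v v = 0\<^sub>v k"
  proof (rule eq_vecI)
    show "dim_vec (?S *\<^sub>v v) = dim_vec (0\<^sub>v k)" using S by auto
    fix i assume "i < dim_vec (0\<^sub>v k)"
    hence i: "i < k" by auto
    have ir: "i < card {i. i < dim_row A \<and> i \<in> I}" using dr i unfolding dim_submatrix by simp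
    have pi: "pick I i < dim_row A" using pick_le[OF ir] .
    have "(?S *\<^sub>v v) $ i = (\<Sum>t<k. real_of_int (A $$ (pick I i, pick J t)) * c (pick J t))"
      using S i unfolding v_def
      by (auto simp: scalar_prod_def submatrix_index[OF ir] cJ k_def intro!: sum.cong)
    also have "\<dots> = (\<Sum>j\<in>J. real_of_int (A $$ (pick I i, j)) * c j)"
      using sum.reindex_bij_betw[OF bij, of "\<lambda>j. real_of_int (A $$ (pick I i, j)) * c j"] by simp
    also have "\<dots> = 0" using c[OF pi] by (simp add: mult.commute)
    finally show "(?S *\<^sub>v v) $ i = 0\<^sub>v k $ i" using i by simp
  qed
  have "det ?S = 0" using det_0_iff_vec_prod_zero[OF S] v v0 Sv by blast
  thus ?thesis by simp
qed



lemma det_unitri: fixes l :: "nat \<Rightarrow> real"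
  shows "det (mat (Suc k) (Suc k) (\<lambda>(s,t). if s = t then 1 else if s = 0 \<and> 0 < t then l t else 0)) = 1"
proof -
  let ?E = "mat (Suc k) (Suc k) (\<lambda>(s,t). if s = t then 1 else if s = 0 \<and> 0 < t then l t else 0)"
  have ut: "upper_triangular ?E" unfolding upper_triangular_def by auto
  have "diag_mat ?E = map (\<lambda>i. 1) [0..<Suc k]" unfolding diag_mat_def by (rule map_cong, auto)
  also have "\<dots> = replicate (Suc k) 1" by (simp add: map_replicate_const)
  finally have "diag_mat ?E = replicate (Suc k) 1" .
  thus ?thesis using det_upper_triangular[OF ut, of "Suc k"] by simp
qed

lemma sum_delta_mult: fixes t k :: nat shows "t < k \<Longrightarrow> (\<Sum>s = 0..<k. (g s :: real) * (if s = t then 1 else 0)) = g t"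
proof -
  assume t: "t < k"
  have "(\<Sum>s = 0..<k. (g s :: real) * (if s = t then 1 else 0)) = (\<Sum>s = 0..<k. if s = t then g s else 0)"
    by (rule sum.cong, auto)
  also have "\<dots> = g t" using t by (subst sum.delta, auto)
  finally show ?thesis .
qed

lemma rows_exist:
  fixes v :: "nat \<Rightarrow> nat \<Rightarrow> real"
  assumes "\<And>c. (\<And>r. r < m \<Longrightarrow> (\<Sum>t<k. c t * v t r) = 0) \<Longrightarrow> (\<forall>t<k. c t = 0)"
  shows "\<exists>\<rho>. inj_on \<rho> {..<k} \<and> \<rho> ` {..<k} \<subseteq> {..<m} \<and> det (mat k k (\<lambda>(i,t). v t (\<rho> i))) \<noteq> 0"
  using assms
proof (induction k arbitrary: v)
  case 0
  show ?case by (rule exI[of _ id], simp add: det_dim_zero)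
next
  case (Suc k)
  note indep = Suc.prems
  have "\<exists>r0<m. v 0 r0 \<noteq> 0"
  proof (rule ccontr)
    assume "\<not> ?thesis"
    hence z: "\<And>r. r < m \<Longrightarrow> v 0 r = 0" by auto
    have "\<forall>t<Suc k. (\<lambda>t. if t = 0 then 1 else 0::real) t = 0"
    proof (rule indep)
      fix r assume "r < m"
      have "(\<Sum>t<Suc k. (if t = 0 then 1 else 0) * v t r) = (\<Sum>t<Suc k. if t = 0 then v t r else 0)"
        by (rule sum.cong, auto)
      also have "\<dots> = v 0 r" by (simp add: sum.delta)
      finally show "(\<Sum>t<Suc k. (if t = 0 then 1 else 0) * v t r) = 0" using z \<open>r < m\<close> by simp
    qed
    thus False by auto
  qed
  then obtain r0 where r0: "r0 < m" "v 0 r0 \<noteq> 0" by auto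
  define l where "l t = v (Suc t) r0 / v 0 r0" for t
  define w where "w t r = v (Suc t) r - l t * v 0 r" for t r
  have wr0: "w t r0 = 0" for t unfolding w_def l_def using r0 by simp
  have windep: "\<forall>t<k. c t = 0" if h: "\<And>r. r < m \<Longrightarrow> (\<Sum>t<k. c t * w t r) = 0" for c
  proof -
    define c' where "c' t = (if t = 0 then - (\<Sum>s<k. c s * l s) else c (t - 1))" for t
    have "\<forall>t<Suc k. c' t = 0"
    proof (rule indep)
      fix r assume r: "r < m"
      have "(\<Sum>t<Suc k. c' t * v t r) = c' 0 * v 0 r + (\<Sum>t<k. c t * v (Suc t) r)"
        by (simp add: sum.lessThan_Suc_shift c'_def del: sum.lessThan_Suc)
      also have "\<dots> = (\<Sum>t<k. c t * w t r)"
        by (simp add: c'_def w_def sum_distrib_right sum_distrib_left algebra_simps sum_subtractf)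
      also have "\<dots> = 0" using h r .
      finally show "(\<Sum>t<Suc k. c' t * v t r) = 0" .
    qed
    thus "\<forall>t<k. c t = 0" by (auto simp: c'_def)
  qed
  from Suc.IH[of w, OF windep] obtain \<rho>' where
    \<rho>': "inj_on \<rho>' {..<k}" "\<rho>' ` {..<k} \<subseteq> {..<m}"
    and dW: "det (mat k k (\<lambda>(i,t). w t (\<rho>' i))) \<noteq> 0" by blast
  have notin: "r0 \<notin> \<rho>' ` {..<k}"
  proof
    assume "r0 \<in> \<rho>' ` {..<k}" then obtain i0 where i0: "i0 < k" "\<rho>' i0 = r0" by auto
    have "det (mat k k (\<lambda>(i,t). w t (\<rho>' i))) = 0"
      by (rule det_zero_row[of _ k i0], auto simp: i0 wr0)
    with dW show False by simp
  qed
  define \<rho> where "\<rho> i = (if i = 0 then r0 else \<rho>' (i - 1))" for i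
  have inj: "inj_on \<rho> {..<Suc k}"
  proof (rule inj_onI)
    fix x y assume x: "x \<in> {..<Suc k}" and y: "y \<in> {..<Suc k}" and e: "\<rho> x = \<rho> y"
    show "x = y"
    proof (cases "x = 0"; cases "y = 0")
      assume "x \<noteq> 0" "y \<noteq> 0"
      hence "\<rho>' (x - 1) = \<rho>' (y - 1)" "x - 1 \<in> {..<k}" "y - 1 \<in> {..<k}" using e x y by (auto simp: \<rho>_def)
      hence "x - 1 = y - 1" using \<rho>'(1) by (auto dest: inj_onD)
      thus "x = y" using \<open>x \<noteq> 0\<close> \<open>y \<noteq> 0\<close> by simp
    qed (insert notin e x y, auto simp: \<rho>_def)
  qed
  have rng: "\<rho> ` {..<Suc k} \<subseteq> {..<m}"
    using \<rho>'(2) r0 by (force simp: \<rho>_def less_Suc_eq_0_disj)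
  define V where "V = mat (Suc k) (Suc k) (\<lambda>(i,t). v t (\<rho> i))"
  define E where "E = mat (Suc k) (Suc k) (\<lambda>(s,t). if s = t then 1 else if s = 0 \<and> 0 < t then - l (t - 1) else 0)"
  have dE: "det E = 1" unfolding E_def by (rule det_unitri)
  define W where "W = mat k k (\<lambda>(i,t). w t (\<rho>' i))"
  let ?F = "four_block_mat (mat 1 1 (\<lambda>_. v 0 r0)) (0\<^sub>m 1 k) (mat k 1 (\<lambda>(i,_). v 0 (\<rho>' i))) W"
  have VE: "V * E = ?F"
  proof (rule eq_matI)
    show "dim_row (V * E) = dim_row ?F" "dim_col (V * E) = dim_col ?F"
      by (simp_all add: V_def E_def W_def)
    fix i j assume "i < dim_row ?F" "j < dim_col ?F"
    hence i: "i < Suc k" and j: "j < Suc k" by (simp_all add: W_def)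
    have "(V * E) $$ (i,j) = (\<Sum>s = 0..<Suc k. v s (\<rho> i) * E $$ (s,j))"
      using i j by (simp add: V_def E_def scalar_prod_def)
    also have "\<dots> = v 0 (\<rho> i) * E $$ (0,j) + (\<Sum>s = 0..<k. v (Suc s) (\<rho> i) * E $$ (Suc s, j))"
      by (subst sum.atLeast0_lessThan_Suc_shift, simp add: o_def)
    also have "\<dots> = ?F $$ (i,j)"
    proof (cases j)
      case 0
      thus ?thesis using i by (simp add: E_def W_def \<rho>_def)
    next
      case (Suc t)
      have t: "t < k" using j Suc by simp
      have "(\<Sum>s = 0..<k. v (Suc s) (\<rho> i) * E $$ (Suc s, j)) = (\<Sum>s = 0..<k. v (Suc s) (\<rho> i) * (if s = t then 1 else 0))"
        by (rule sum.cong, insert j Suc, auto simp: E_def)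
      also have "\<dots> = v (Suc t) (\<rho> i)" by (rule sum_delta_mult[OF t])
      finally have "v 0 (\<rho> i) * E $$ (0,j) + (\<Sum>s = 0..<k. v (Suc s) (\<rho> i) * E $$ (Suc s, j)) = w t (\<rho> i)"
        using j Suc by (simp add: E_def w_def)
      also have "\<dots> = ?F $$ (i,j)" using i Suc t by (cases i, auto simp: W_def \<rho>_def wr0)
      finally show ?thesis .
    qed
    finally show "(V * E) $$ (i,j) = ?F $$ (i,j)" .
  qed
  have Vc: "V \<in> carrier_mat (Suc k) (Suc k)" and Ec: "E \<in> carrier_mat (Suc k) (Suc k)"
    by (simp_all add: V_def E_def)
  have "det (V * E) = det V" using det_mult[OF Vc Ec] dE by simp
  moreover have "det ?F = v 0 r0 * det W"
    by (subst det_four_block_mat_upper_right_zero[of _ 1 _ k], auto simp: W_def det_single)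
  ultimately have "det V = v 0 r0 * det W" using VE by simp
  hence "det V \<noteq> 0" using r0 dW by (simp add: W_def)
  thus ?case using inj rng unfolding V_def by blast
qed



lemma perm_of_inj:
  assumes inj: "inj_on \<rho> {..<k}"
  shows "\<exists>\<pi>. \<pi> permutes {0..<k} \<and> (\<forall>i<k. pick (\<rho> ` {..<k}) (\<pi> i) = \<rho> i)"
proof -
  let ?I = "\<rho> ` {..<k}"
  define \<pi> where "\<pi> i = (if i < k then card {a \<in> ?I. a < \<rho> i} else i)" for i
  have cI: "card ?I = k" using card_image[OF inj] by simp
  have pk: "pick ?I (\<pi> i) = \<rho> i" if "i < k" for i
    using pick_card_in_set[of "\<rho> i" ?I] that by (simp add: \<pi>_def)
  have lt: "\<pi> i < k" if i: "i < k" for i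
  proof -
    have "{a \<in> ?I. a < \<rho> i} \<subset> ?I" using i by auto
    hence "card {a \<in> ?I. a < \<rho> i} < card ?I" by (rule psubset_card_mono[rotated], simp)
    thus ?thesis using i cI by (simp add: \<pi>_def)
  qed
  have injp: "inj_on \<pi> {0..<k}"
  proof (rule inj_onI)
    fix x y assume x: "x \<in> {0..<k}" and y: "y \<in> {0..<k}" and e: "\<pi> x = \<pi> y"
    hence "\<rho> x = \<rho> y" using pk[of x] pk[of y] by auto
    thus "x = y" using inj x y by (auto dest: inj_onD)
  qed
  have img: "\<pi> ` {0..<k} = {0..<k}"
    by (rule endo_inj_surj[OF _ _ injp], auto intro: lt)
  have "\<pi> permutes {0..<k}"
    by (rule bij_imp_permutes, unfold bij_betw_def, insert injp img, auto simp: \<pi>_def)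
  thus ?thesis using pk by blast
qed

lemma det_tuple_submatrix:
  fixes B :: "'a :: comm_ring_1 mat"
  assumes \<rho>: "inj_on \<rho> {..<k}" "\<rho> ` {..<k} \<subseteq> {..<dim_row B}"
  and q: "inj_on q {..<k}" "q ` {..<k} \<subseteq> {..<dim_col B}"
  shows "det (mat k k (\<lambda>(i,t). B $$ (\<rho> i, q t))) \<in> {det (submatrix B (\<rho> ` {..<k}) (q ` {..<k})), - det (submatrix B (\<rho> ` {..<k}) (q ` {..<k}))}"
proof -
  let ?I = "\<rho> ` {..<k}" and ?J = "q ` {..<k}"
  obtain \<pi> where \<pi>: "\<pi> permutes {0..<k}" "\<And>i. i<k \<Longrightarrow> pick ?I (\<pi> i) = \<rho> i" using perm_of_inj[OF \<rho>(1)] by blast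
  obtain \<sigma> where \<sigma>: "\<sigma> permutes {0..<k}" "\<And>i. i<k \<Longrightarrow> pick ?J (\<sigma> i) = q i" using perm_of_inj[OF q(1)] by blast
  have pin: "\<pi> i < k" if "i < k" for i using permutes_in_image[OF \<pi>(1)] that by auto
  have sin: "\<sigma> i < k" if "i < k" for i using permutes_in_image[OF \<sigma>(1)] that by auto
  have cI: "{i. i < dim_row B \<and> i \<in> ?I} = ?I" using \<rho>(2) by auto
  have cJ: "{i. i < dim_col B \<and> i \<in> ?J} = ?J" using q(2) by auto
  have kI: "card ?I = k" using card_image[OF \<rho>(1)] by simp
  have kJ: "card ?J = k" using card_image[OF q(1)] by simp
  define N where "N = mat k k (\<lambda>(i,t). B $$ (pick ?I i, q t))"
  have "mat k k (\<lambda>(i,t). B $$ (\<rho> i, q t)) = mat k k (\<lambda>(i,t). N $$ (\<pi> i, t))"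
    by (rule eq_matI, auto simp: N_def pin \<pi>(2))
  hence d1: "det (mat k k (\<lambda>(i,t). B $$ (\<rho> i, q t))) = signof \<pi> * det N"
    using det_permute_rows[of N k \<pi>] \<pi>(1) by (simp add: N_def)
  define Q where "Q = mat k k (\<lambda>(t,i). B $$ (pick ?I i, pick ?J t))"
  have "transpose_mat N = mat k k (\<lambda>(t,i). Q $$ (\<sigma> t, i))"
    by (rule eq_matI, auto simp: N_def Q_def sin \<sigma>(2))
  hence "det (transpose_mat N) = signof \<sigma> * det Q"
    using det_permute_rows[of Q k \<sigma>] \<sigma>(1) by (simp add: Q_def)
  hence d2: "det N = signof \<sigma> * det Q" using det_transpose[of N k] by (simp add: N_def)
  have "transpose_mat Q = submatrix B ?I ?J"
    by (rule eq_matI, auto simp: Q_def submatrix_def cI cJ kI kJ)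
  hence d3: "det Q = det (submatrix B ?I ?J)" using det_transpose[of Q k] by (simp add: Q_def)
  have e: "det (mat k k (\<lambda>(i,t). B $$ (\<rho> i, q t))) = (signof \<pi> * signof \<sigma>) * det (submatrix B ?I ?J)"
    using d1 d2 d3 by (simp add: mult.assoc)
  have "(signof \<pi> * signof \<sigma> :: 'a) = 1 \<or> (signof \<pi> * signof \<sigma> :: 'a) = -1"
    by (cases "evenperm \<pi>"; cases "evenperm \<sigma>", auto simp: sign_def)
  thus ?thesis unfolding e by auto
qed



abbreviation M0 :: "(nat + nat) matroid" where
  "M0 \<equiv> direct_sum (uniform_matroid 2 4) (uniform_matroid 2 4)"

abbreviation G0 :: "(nat + nat) set" where
  "G0 \<equiv> Inl ` {0..<4} \<union> Inr ` {0..<4}"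

lemma ground_M0: "ground M0 = G0"
  by (simp add: ground_def direct_sum_def uniform_matroid_def)

lemma vimage_Inl_sub: "X \<subseteq> G0 \<Longrightarrow> Inl -` X \<subseteq> {0..<4}" by auto
lemma vimage_Inr_sub: "X \<subseteq> G0 \<Longrightarrow> Inr -` X \<subseteq> {0..<4}" by auto

lemma indep_M0: "indep M0 X \<longleftrightarrow> X \<subseteq> G0 \<and> card (Inl -` X) \<le> 2 \<and> card (Inr -` X) \<le> 2"
proof -
  have "indep M0 X \<longleftrightarrow> (Inl -` X \<subseteq> {0..<4} \<and> card (Inl -` X) \<le> 2) \<and> (Inr -` X \<subseteq> {0..<4} \<and> card (Inr -` X) \<le> 2) \<and> X \<subseteq> G0"
    by (simp add: indep_def direct_sum_def uniform_matroid_def ground_def)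
  thus ?thesis by blast
qed

lemma sum_set_decomp: "X = Inl ` (Inl -` X) \<union> Inr ` (Inr -` X)"
proof (intro equalityI subsetI)
  fix x assume "x \<in> X" thus "x \<in> Inl ` (Inl -` X) \<union> Inr ` (Inr -` X)" by (cases x, auto)
qed auto

lemma card_Inl_Inr: fixes A :: "'a set" and B :: "'b set" assumes "finite A" "finite B"
  shows "card (Inl ` A \<union> Inr ` B) = card A + card B"
proof -
  have "card (Inl ` A \<union> Inr ` B) = card (Inl ` A :: ('a + 'b) set) + card (Inr ` B :: ('a + 'b) set)"
  proof (rule card_Un_disjoint)
    show "Inl ` A \<inter> Inr ` B = {}" by blast
  qed (insert assms, auto)
  thus ?thesis by (simp add: card_image)
qed

lemma card_sum_set: assumes "finite X" shows "card X = card (Inl -` X) + card (Inr -` X)"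
proof -
  have f1: "finite (Inl -` X)" using assms by (simp add: finite_vimageI)
  have f2: "finite (Inr -` X)" using assms by (simp add: finite_vimageI)
  have "card X = card (Inl ` (Inl -` X) \<union> Inr ` (Inr -` X))" using sum_set_decomp[of X] by simp
  also have "\<dots> = card (Inl -` X) + card (Inr -` X)" by (rule card_Inl_Inr[OF f1 f2])
  finally show ?thesis .
qed

lemma finite_G0_sub: "X \<subseteq> G0 \<Longrightarrow> finite X"
  by (rule finite_subset, assumption, simp)

lemma mrank_M0: assumes Y: "Y \<subseteq> G0"
  shows "mrank M0 Y = min 2 (card (Inl -` Y)) + min 2 (card (Inr -` Y))"
proof -
  let ?S = "{card Z | Z. Z \<subseteq> Y \<and> indep M0 Z}"
  let ?v = "min 2 (card (Inl -` Y)) + min 2 (card (Inr -` Y))"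
  have fY: "finite Y" using finite_G0_sub[OF Y] .
  have fL: "finite (Inl -` Y)" using fY by (simp add: finite_vimageI)
  have fR: "finite (Inr -` Y)" using fY by (simp add: finite_vimageI)
  have fin: "finite ?S"
    by (rule finite_subset[of _ "card ` Pow Y"], auto simp: fY)
  have ub: "x \<le> ?v" if "x \<in> ?S" for x
  proof -
    from that obtain Z where Z: "Z \<subseteq> Y" "indep M0 Z" "x = card Z" by blast
    have fZ: "finite Z" using Z(1) fY finite_subset by blast
    have "card (Inl -` Z) \<le> card (Inl -` Y)" by (rule card_mono[OF fL], insert Z(1), auto)
    moreover have "card (Inr -` Z) \<le> card (Inr -` Y)" by (rule card_mono[OF fR], insert Z(1), auto)
    ultimately show ?thesis using Z(2,3) card_sum_set[OF fZ] unfolding indep_M0 by (auto simp: min_def)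
  qed
  obtain ZL where ZL: "ZL \<subseteq> Inl -` Y" "card ZL = min 2 (card (Inl -` Y))"
    using obtain_subset_with_card_n[of "min 2 (card (Inl -` Y))" "Inl -` Y"] by auto
  obtain ZR where ZR: "ZR \<subseteq> Inr -` Y" "card ZR = min 2 (card (Inr -` Y))"
    using obtain_subset_with_card_n[of "min 2 (card (Inr -` Y))" "Inr -` Y"] by auto
  let ?Z = "Inl ` ZL \<union> Inr ` ZR"
  have fZ: "finite ?Z" using ZL(1) ZR(1) fL fR finite_subset by blast
  have vl: "Inl -` ?Z = ZL" by auto
  have vr: "Inr -` ?Z = ZR" by auto
  have "?Z \<subseteq> Y" using ZL(1) ZR(1) by auto
  moreover have "indep M0 ?Z" unfolding indep_M0 vl vr using ZL ZR \<open>?Z \<subseteq> Y\<close> Y by auto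
  ultimately have "card ?Z \<in> ?S" by blast
  moreover have "card ?Z = ?v" using card_sum_set[OF fZ] vl vr ZL ZR by simp
  ultimately have "?v \<in> ?S" by simp
  thus ?thesis unfolding mrank_def using fin ub by (intro Max_eqI) auto
qed

lemma minor_M0:
  assumes C: "C \<subseteq> G0"
  shows "ground (minor_of M0 C D) = G0 - C - D"
    and "indep (minor_of M0 C D) X \<longleftrightarrow> X \<subseteq> G0 - C - D
        \<and> card (Inl -` X) \<le> 2 - card (Inl -` C) \<and> card (Inr -` X) \<le> 2 - card (Inr -` C)"
proof -
  show "ground (minor_of M0 C D) = G0 - C - D"
    by (simp add: minor_of_def deletion_def contraction_def ground_def[symmetric] ground_M0)
       (simp add: ground_def)
  have "indep (minor_of M0 C D) X \<longleftrightarrow> (X \<subseteq> G0 - C - D \<and> mrank M0 (X \<union> C) = card X + mrank M0 C)"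
    by (auto simp: minor_of_def deletion_def contraction_def indep_def ground_def[symmetric] ground_M0)
       (auto simp: ground_def)
  also have "\<dots> \<longleftrightarrow> X \<subseteq> G0 - C - D
        \<and> card (Inl -` X) \<le> 2 - card (Inl -` C) \<and> card (Inr -` X) \<le> 2 - card (Inr -` C)"
  proof (cases "X \<subseteq> G0 - C - D")
    case True
    have XC: "X \<union> C \<subseteq> G0" using True C by auto
    have fX: "finite X" using True finite_G0_sub by blast
    have fC: "finite C" using C finite_G0_sub by blast
    have l: "card (Inl -` (X \<union> C)) = card (Inl -` X) + card (Inl -` C)"
      by (simp add: vimage_Un, rule card_Un_disjoint, insert fX fC True, auto simp: finite_vimageI)
    have r: "card (Inr -` (X \<union> C)) = card (Inr -` X) + card (Inr -` C)"
      by (simp add: vimage_Un, rule card_Un_disjoint, insert fX fC True, auto simp: finite_vimageI)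
    show ?thesis unfolding mrank_M0[OF XC] mrank_M0[OF C] l r card_sum_set[OF fX] using True by auto
  qed auto
  finally show "indep (minor_of M0 C D) X \<longleftrightarrow> X \<subseteq> G0 - C - D
        \<and> card (Inl -` X) \<le> 2 - card (Inl -` C) \<and> card (Inr -` X) \<le> 2 - card (Inr -` C)" .
qed



lemma abs_one_cases: "\<bar>x::real\<bar> = 1 \<longleftrightarrow> x = 1 \<or> x = -1" by auto

lemma exists_not_one:
  fixes X :: "nat \<Rightarrow> nat \<Rightarrow> real"
  assumes X01: "X 0 1 = 1"
  and PX: "X 0 1 * X 2 3 - X 0 2 * X 1 3 + X 0 3 * X 1 2 = 0"
  shows "\<exists>i j. i < 4 \<and> j < 4 \<and> i \<noteq> j \<and> \<bar>X i j\<bar> \<noteq> 1"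
proof (rule ccontr)
  assume "\<not> ?thesis"
  hence h: "\<bar>X i j\<bar> = 1" if "i < 4" "j < 4" "i \<noteq> j" for i j using that by auto
  have "X 2 3 = 1 \<or> X 2 3 = -1" using h[of 2 3] by auto
  moreover have "X 0 2 = 1 \<or> X 0 2 = -1" using h[of 0 2] by auto
  moreover have "X 1 3 = 1 \<or> X 1 3 = -1" using h[of 1 3] by auto
  moreover have "X 0 3 = 1 \<or> X 0 3 = -1" using h[of 0 3] by auto
  moreover have "X 1 2 = 1 \<or> X 1 2 = -1" using h[of 1 2] by auto
  ultimately show False using PX X01 by auto
qed

lemma arith_core:
  fixes D :: real and X Y :: "nat \<Rightarrow> nat \<Rightarrow> real"
  assumes X01: "X 0 1 = 1" and Y01: "Y 0 1 = 1"
  and P: "\<And>i j k l. i\<noteq>j \<Longrightarrow> k\<noteq>l \<Longrightarrow> i<4 \<Longrightarrow> j<4 \<Longrightarrow> k<4 \<Longrightarrow> l<4 \<Longrightarrow>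
     \<bar>D * X i j * Y k l\<bar> = 1 \<or> \<bar>D * X i j * Y k l\<bar> = 2"
  and PX: "X 0 1 * X 2 3 - X 0 2 * X 1 3 + X 0 3 * X 1 2 = 0"
  and PY: "Y 0 1 * Y 2 3 - Y 0 2 * Y 1 3 + Y 0 3 * Y 1 2 = 0"
  shows False
proof -
  obtain i j where ij: "i < 4" "j < 4" "i \<noteq> j" "\<bar>X i j\<bar> \<noteq> 1" using exists_not_one[OF X01 PX] by blast
  obtain k l where kl: "k < 4" "l < 4" "k \<noteq> l" "\<bar>Y k l\<bar> \<noteq> 1" using exists_not_one[OF Y01 PY] by blast
  have d: "\<bar>D\<bar> = 1 \<or> \<bar>D\<bar> = 2" using P[of 0 1 0 1] X01 Y01 by simp
  have dx: "\<bar>D\<bar> * \<bar>X i j\<bar> = 1 \<or> \<bar>D\<bar> * \<bar>X i j\<bar> = 2" using P[of i j 0 1] ij Y01 by (simp add: abs_mult)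
  have dy: "\<bar>D\<bar> * \<bar>Y k l\<bar> = 1 \<or> \<bar>D\<bar> * \<bar>Y k l\<bar> = 2" using P[of 0 1 k l] kl X01 by (simp add: abs_mult)
  have dxy: "\<bar>D\<bar> * \<bar>X i j\<bar> * \<bar>Y k l\<bar> = 1 \<or> \<bar>D\<bar> * \<bar>X i j\<bar> * \<bar>Y k l\<bar> = 2" using P[of i j k l] ij kl by (simp add: abs_mult)
  from d show False
  proof
    assume "\<bar>D\<bar> = 1"
    hence "\<bar>X i j\<bar> = 2" "\<bar>Y k l\<bar> = 2" using dx dy ij kl by auto
    thus False using dxy \<open>\<bar>D\<bar> = 1\<close> by simp
  next
    assume "\<bar>D\<bar> = 2"
    hence hx: "\<bar>X i j\<bar> = 1/2" and hy: "\<bar>Y k l\<bar> = 1/2" using dx dy ij kl by auto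
    from dxy show False unfolding hx hy \<open>\<bar>D\<bar> = 2\<close> by simp
  qed
qed

lemma coord:
  assumes ind: "cols_lin_indep A {p,q}" and dep: "\<not> cols_lin_indep A {p,q,s}"
  and d: "p \<noteq> q" "s \<noteq> p" "s \<noteq> q"
  shows "\<exists>\<alpha> \<beta>. \<forall>r<dim_row A. real_of_int (A$$(r,s)) = \<alpha> * real_of_int (A$$(r,p)) + \<beta> * real_of_int (A$$(r,q))"
proof -
  from dep have "\<exists>c :: nat \<Rightarrow> real. (\<forall>i < dim_row A. (\<Sum>j\<in>{p,q,s}. c j * real_of_int (A $$ (i, j))) = 0) \<and> (\<exists>j\<in>{p,q,s}. c j \<noteq> 0)"
    unfolding cols_lin_indep_def by simp
  then obtain c :: "nat \<Rightarrow> real" where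
    c: "\<And>i. i < dim_row A \<Longrightarrow> c p * real_of_int (A $$ (i, p)) + c q * real_of_int (A $$ (i, q)) + c s * real_of_int (A $$ (i, s)) = 0"
    and nz: "c p \<noteq> 0 \<or> c q \<noteq> 0 \<or> c s \<noteq> 0" using d by (auto simp: add.assoc)
  have cs: "c s \<noteq> 0"
  proof
    assume cs0: "c s = 0"
    have "\<forall>j\<in>{p,q}. c j = 0"
      using ind unfolding cols_lin_indep_def
    proof (elim allE impE)
      show "\<forall>i<dim_row A. (\<Sum>j\<in>{p, q}. c j * real_of_int (A $$ (i, j))) = 0" using c cs0 d by auto
    qed
    thus False using nz cs0 by auto
  qed
  show ?thesis
  proof (intro exI allI impI)
    fix r assume r: "r < dim_row A"
    show "real_of_int (A$$(r,s)) = (- c p / c s) * real_of_int (A$$(r,p)) + (- c q / c s) * real_of_int (A$$(r,q))"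
      using c[OF r] cs by (simp add: field_simps)
  qed
qed

lemma X_nonzero:
  assumes ind: "cols_lin_indep A {s,s'}" and ne: "s \<noteq> s'"
  and cs: "\<forall>r<dim_row A. real_of_int (A$$(r,s)) = a1 * real_of_int (A$$(r,p)) + b1 * real_of_int (A$$(r,q))"
  and cs': "\<forall>r<dim_row A. real_of_int (A$$(r,s')) = a2 * real_of_int (A$$(r,p)) + b2 * real_of_int (A$$(r,q))"
  shows "a1 * b2 - a2 * b1 \<noteq> 0"
proof
  assume X: "a1 * b2 - a2 * b1 = 0"
  have "\<exists>c1 c2. (c1 \<noteq> 0 \<or> c2 \<noteq> 0) \<and> (\<forall>r<dim_row A. c1 * real_of_int (A$$(r,s)) + c2 * real_of_int (A$$(r,s')) = 0)"
  proof (cases "b1 \<noteq> 0 \<or> b2 \<noteq> 0")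
    case True
    show ?thesis
      by (rule exI[of _ b2], rule exI[of _ "-b1"], insert True cs cs' X, auto simp: algebra_simps)
  next
    case False
    show ?thesis
    proof (cases "a1 \<noteq> 0 \<or> a2 \<noteq> 0")
      case True
      show ?thesis
        by (rule exI[of _ a2], rule exI[of _ "-a1"], insert True False cs cs', auto simp: algebra_simps)
    next
      case False2: False
      show ?thesis
        by (rule exI[of _ 1], rule exI[of _ 0], insert False False2 cs, auto)
    qed
  qed
  then obtain c1 c2 where cc: "c1 \<noteq> 0 \<or> c2 \<noteq> 0"
    "\<And>r. r<dim_row A \<Longrightarrow> c1 * real_of_int (A$$(r,s)) + c2 * real_of_int (A$$(r,s')) = 0" by blast
  let ?c = "\<lambda>j. if j = s then c1 else c2"
  have "\<forall>j\<in>{s,s'}. ?c j = 0"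
    using ind unfolding cols_lin_indep_def
  proof (elim allE impE)
    show "\<forall>i<dim_row A. (\<Sum>j\<in>{s,s'}. ?c j * real_of_int (A $$ (i, j))) = 0" using cc(2) ne by auto
  qed
  thus False using cc(1) ne by auto
qed



definition Tmat :: "(nat \<Rightarrow> real) \<Rightarrow> (nat \<Rightarrow> real) \<Rightarrow> (nat \<Rightarrow> real) \<Rightarrow> (nat \<Rightarrow> real) \<Rightarrow> real mat" where
  "Tmat x y z w = mat 4 4 (\<lambda>(s,t). if t < 2 then (if s = 0 then x t else if s = 1 then y t else 0)
     else (if s = 2 then z t else if s = 3 then w t else 0))"

lemma less4_cases: "(t::nat) < 4 \<Longrightarrow> t = 0 \<or> t = 1 \<or> t = 2 \<or> t = 3" by auto

lemma det_Tmat: "det (Tmat x y z w) = (x 0 * y 1 - x 1 * y 0) * (z 2 * w 3 - z 3 * w 2)"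
proof -
  let ?T1 = "mat 2 2 (\<lambda>(s,t). if s = 0 then x t else y t)"
  let ?T2 = "mat 2 2 (\<lambda>(s,t). if s = 0 then z (t+2) else w (t+2))"
  have e: "Tmat x y z w = four_block_mat ?T1 (0\<^sub>m 2 2) (0\<^sub>m 2 2) ?T2"
  proof (rule eq_matI)
    fix i j assume "i < dim_row (four_block_mat ?T1 (0\<^sub>m 2 2) (0\<^sub>m 2 2) ?T2)"
      "j < dim_col (four_block_mat ?T1 (0\<^sub>m 2 2) (0\<^sub>m 2 2) ?T2)"
    hence i: "i < 4" and j: "j < 4" by auto
    show "Tmat x y z w $$ (i,j) = four_block_mat ?T1 (0\<^sub>m 2 2) (0\<^sub>m 2 2) ?T2 $$ (i,j)"
      using less4_cases[OF i] less4_cases[OF j] by (auto simp: Tmat_def eval_nat_numeral)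
  qed (auto simp: Tmat_def)
  have "det (Tmat x y z w) = det ?T1 * det ?T2"
    unfolding e by (rule det_four_block_mat_upper_right_zero, auto)
  also have "det ?T1 = x 0 * y 1 - x 1 * y 0" by (subst det2, auto)
  also have "det ?T2 = z 2 * w 3 - z 3 * w 2" by (subst det2, auto simp: eval_nat_numeral)
  finally show ?thesis .
qed

lemma sum4: "(\<Sum>s::nat = 0..<4. g s) = g 0 + g 1 + g 2 + (g 3 :: real)"
  by (simp add: eval_nat_numeral)

lemma mat_prod_T:
  assumes rho: "\<And>i. i < 4 \<Longrightarrow> \<rho> i < m"
  and g01: "\<And>r t. r < m \<Longrightarrow> t < 2 \<Longrightarrow> g t r = x t * h 0 r + y t * h 1 r"
  and g23: "\<And>r t. r < m \<Longrightarrow> 2 \<le> t \<Longrightarrow> t < 4 \<Longrightarrow> g t r = z t * h 2 r + w t * h 3 r"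
  shows "det (mat 4 4 (\<lambda>(r,t). g t (\<rho> r))) = det (mat 4 4 (\<lambda>(r,t). h t (\<rho> r))) * det (Tmat x y z w)"
proof -
  have "mat 4 4 (\<lambda>(r,t). g t (\<rho> r)) = mat 4 4 (\<lambda>(r,t). h t (\<rho> r)) * Tmat x y z w"
  proof (rule eq_matI)
    fix i j assume "i < dim_row (mat 4 4 (\<lambda>(r,t). h t (\<rho> r)) * Tmat x y z w)"
      "j < dim_col (mat 4 4 (\<lambda>(r,t). h t (\<rho> r)) * Tmat x y z w)"
    hence i: "i < 4" and j: "j < 4" by (auto simp: Tmat_def)
    have "(mat 4 4 (\<lambda>(r,t). h t (\<rho> r)) * Tmat x y z w) $$ (i,j)
       = (\<Sum>s = 0..<4. h s (\<rho> i) * Tmat x y z w $$ (s,j))"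
      using i j by (simp add: Tmat_def scalar_prod_def)
    also have "\<dots> = g j (\<rho> i)"
      unfolding sum4 using less4_cases[OF j] g01[OF rho[OF i]] g23[OF rho[OF i]]
      by (auto simp: Tmat_def algebra_simps)
    finally show "mat 4 4 (\<lambda>(r,t). g t (\<rho> r)) $$ (i,j) = (mat 4 4 (\<lambda>(r,t). h t (\<rho> r)) * Tmat x y z w) $$ (i,j)"
      using i j by simp
  qed (auto simp: Tmat_def)
  hence "det (mat 4 4 (\<lambda>(r,t). g t (\<rho> r))) = det (mat 4 4 (\<lambda>(r,t). h t (\<rho> r)) * Tmat x y z w)" by simp
  also have "\<dots> = det (mat 4 4 (\<lambda>(r,t). h t (\<rho> r))) * det (Tmat x y z w)"
    by (rule det_mult[of _ 4], auto simp: Tmat_def)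
  finally show ?thesis .
qed

lemma submatrix_map: "submatrix (map_mat g A) I J = map_mat g (submatrix A I J)"
  by (rule eq_matI, auto simp: submatrix_def pick_le)



lemma indep_vm: "indep (vector_matroid A) Y \<longleftrightarrow> Y \<subseteq> {0..<dim_col A} \<and> cols_lin_indep A Y"
  by (simp add: indep_def vector_matroid_def)
lemma ground_vm: "ground (vector_matroid A) = {0..<dim_col A}" by (simp add: ground_def vector_matroid_def)

lemma vimage_simps[simp]:
  "Inl -` insert (Inl x) S = insert x (Inl -` S)"
  "Inl -` insert (Inr y) S = Inl -` S"
  "Inr -` insert (Inr y) S = insert y (Inr -` S)"
  "Inr -` insert (Inl x) S = Inr -` S"
  by auto

lemma sum4': "(\<Sum>s::nat <4. g s) = g 0 + g 1 + g 2 + (g 3 :: real)"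
  by (simp add: eval_nat_numeral)

lemma plucker: fixes al be :: "nat \<Rightarrow> real"
  shows "(al 0 * be 1 - al 1 * be 0) * (al 2 * be 3 - al 3 * be 2) - (al 0 * be 2 - al 2 * be 0) * (al 1 * be 3 - al 3 * be 1)
    + (al 0 * be 3 - al 3 * be 0) * (al 1 * be 2 - al 2 * be 1) = 0"
  by (simp add: algebra_simps)



lemma not_in_M2: "\<not> in_M2 M0"
proof
  assume "in_M2 M0"
  then obtain A where dm: "delta_modular 2 A" and iso: "matroid_iso M0 (vector_matroid A)"
    unfolding in_M2_def by blast
  then obtain f where bij: "bij_betw f G0 {0..<dim_col A}"
    and fi: "\<And>X. X \<subseteq> G0 \<Longrightarrow> indep M0 X \<longleftrightarrow> indep (vector_matroid A) (f ` X)"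
    unfolding matroid_iso_def ground_M0 ground_vm by blast
  define m where "m = dim_row A"
  define n where "n = dim_col A"
  have inj: "inj_on f G0" and img: "f ` G0 = {0..<n}" using bij unfolding bij_betw_def n_def by auto
  have ci: "cols_lin_indep A (f ` X) \<longleftrightarrow> indep M0 X" if "X \<subseteq> G0" for X
  proof -
    have "f ` X \<subseteq> {0..<n}" using img that by (metis image_mono)
    thus ?thesis using fi[OF that] unfolding indep_vm n_def by auto
  qed
  define a where "a i = f (Inl i)" for i
  define c where "c i = f (Inr i)" for i
  have aa: "a i = a j \<longleftrightarrow> i = j" if "i < 4" "j < 4" for i j
    using inj that unfolding a_def by (auto dest: inj_onD)
  have cc: "c i = c j \<longleftrightarrow> i = j" if "i < 4" "j < 4" for i j
    using inj that unfolding c_def by (auto dest: inj_onD)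
  have ac: "a i \<noteq> c j" if "i < 4" "j < 4" for i j
    using inj that unfolding a_def c_def by (auto dest: inj_onD)
  have an: "a i < n" if "i < 4" for i using img that unfolding a_def by auto
  have cn: "c i < n" if "i < 4" for i using img that unfolding c_def by auto
  have K3: "cols_lin_indep A {a i, a j, c k, c l}" if "i < 4" "j < 4" "k < 4" "l < 4" "i \<noteq> j" "k \<noteq> l" for i j k l
  proof -
    have "{a i, a j, c k, c l} = f ` {Inl i, Inl j, Inr k, Inr l}" by (simp add: a_def c_def)
    moreover have "indep M0 {Inl i, Inl j, Inr k, Inr l}" unfolding indep_M0 using that by auto
    ultimately show ?thesis using ci[of "{Inl i, Inl j, Inr k, Inr l}"] that by auto
  qed
  have K5a: "cols_lin_indep A {a i, a j}" if "i < 4" "j < 4" for i j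
  proof -
    have "{a i, a j} = f ` {Inl i, Inl j}" by (simp add: a_def)
    moreover have "indep M0 {Inl i, Inl j}" unfolding indep_M0 using that by (auto simp: card_insert_if)
    ultimately show ?thesis using ci[of "{Inl i, Inl j}"] that by auto
  qed
  have K5c: "cols_lin_indep A {c i, c j}" if "i < 4" "j < 4" for i j
  proof -
    have "{c i, c j} = f ` {Inr i, Inr j}" by (simp add: c_def)
    moreover have "indep M0 {Inr i, Inr j}" unfolding indep_M0 using that by (auto simp: card_insert_if)
    ultimately show ?thesis using ci[of "{Inr i, Inr j}"] that by auto
  qed
  have K4a: "\<not> cols_lin_indep A {a 0, a 1, a i}" if "2 \<le> i" "i < 4" for i
  proof -
    have "{a 0, a 1, a i} = f ` {Inl 0, Inl 1, Inl i}" by (simp add: a_def)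
    moreover have "\<not> indep M0 {Inl 0, Inl 1, Inl i}" unfolding indep_M0 using that by auto
    ultimately show ?thesis using ci[of "{Inl 0, Inl 1, Inl i}"] that by auto
  qed
  have K4c: "\<not> cols_lin_indep A {c 0, c 1, c i}" if "2 \<le> i" "i < 4" for i
  proof -
    have "{c 0, c 1, c i} = f ` {Inr 0, Inr 1, Inr i}" by (simp add: c_def)
    moreover have "\<not> indep M0 {Inr 0, Inr 1, Inr i}" unfolding indep_M0 using that by auto
    ultimately show ?thesis using ci[of "{Inr 0, Inr 1, Inr i}"] that by auto
  qed
  have rank: "mat_rank A = 4"
  proof -
    let ?S = "{card X | X. X \<subseteq> {0..<dim_col A} \<and> cols_lin_indep A X}"
    have fin: "finite ?S" by (rule finite_subset[of _ "card ` Pow {0..<dim_col A}"], auto)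
    have "card {a 0, a 1, c 0, c 1} = 4" using aa ac cc by (auto simp: card_insert_if)
    moreover have "{a 0, a 1, c 0, c 1} \<subseteq> {0..<dim_col A}" using an cn n_def by auto
    ultimately have in4: "4 \<in> ?S" using K3[of 0 1 0 1] by force
    have ub: "x \<le> 4" if "x \<in> ?S" for x
    proof -
      from that obtain X where X: "X \<subseteq> {0..<n}" "cols_lin_indep A X" "x = card X" unfolding n_def by blast
      let ?Y = "G0 \<inter> f -` X"
      from X(1) have "X \<subseteq> f ` G0" by (simp only: img)
      hence fY: "f ` ?Y = X" by blast
      have "indep M0 ?Y" using ci[of ?Y] fY X(2) by auto
      hence "card ?Y \<le> 4" unfolding indep_M0 using card_sum_set[of ?Y] by auto
      moreover have "card X = card ?Y" using fY card_image[of f ?Y] inj by (metis inf_le1 inj_on_subset)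
      ultimately show ?thesis using X(3) by simp
    qed
    show ?thesis unfolding mat_rank_def using fin in4 ub by (intro Max_eqI) auto
  qed
  have "\<forall>i. \<exists>ab. i < 4 \<longrightarrow> ((i = 0 \<longrightarrow> fst ab = 1 \<and> snd ab = 0) \<and> (i = 1 \<longrightarrow> fst ab = 0 \<and> snd ab = 1) \<and>
      (\<forall>r<m. real_of_int (A$$(r,a i)) = fst ab * real_of_int (A$$(r,a 0)) + snd ab * real_of_int (A$$(r,a 1))))"
  proof (intro allI)
    fix i
    show "\<exists>ab. i < 4 \<longrightarrow> ((i = 0 \<longrightarrow> fst ab = 1 \<and> snd ab = 0) \<and> (i = 1 \<longrightarrow> fst ab = 0 \<and> snd ab = 1) \<and>
      (\<forall>r<m. real_of_int (A$$(r,a i)) = fst ab * real_of_int (A$$(r,a 0)) + snd ab * real_of_int (A$$(r,a 1))))"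
    proof (cases "i = 0 \<or> i = 1")
      case True
      thus ?thesis by (intro exI[of _ "if i = 0 then (1,0) else (0,1)"], auto)
    next
      case False
      show ?thesis
      proof (cases "i < 4")
        case True
        have "a 0 \<noteq> a 1" "a i \<noteq> a 0" "a i \<noteq> a 1" using aa True False by auto
        from coord[OF K5a[of 0 1] K4a[of i] this] False True
        obtain al be where "\<forall>r<dim_row A. real_of_int (A$$(r,a i)) = al * real_of_int (A$$(r,a 0)) + be * real_of_int (A$$(r,a 1))"
          by auto
        thus ?thesis using False unfolding m_def by (intro exI[of _ "(al,be)"], auto)
      qed auto
    qed
  qed
  from choice[OF this] obtain ABa where ABa: "\<And>i. i < 4 \<Longrightarrow> ((i = 0 \<longrightarrow> fst (ABa i) = 1 \<and> snd (ABa i) = 0) \<and> (i = 1 \<longrightarrow> fst (ABa i) = 0 \<and> snd (ABa i) = 1) \<and>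
      (\<forall>r<m. real_of_int (A$$(r,a i)) = fst (ABa i) * real_of_int (A$$(r,a 0)) + snd (ABa i) * real_of_int (A$$(r,a 1))))"
    by blast
  have "\<forall>i. \<exists>ab. i < 4 \<longrightarrow> ((i = 0 \<longrightarrow> fst ab = 1 \<and> snd ab = 0) \<and> (i = 1 \<longrightarrow> fst ab = 0 \<and> snd ab = 1) \<and>
      (\<forall>r<m. real_of_int (A$$(r,c i)) = fst ab * real_of_int (A$$(r,c 0)) + snd ab * real_of_int (A$$(r,c 1))))"
  proof (intro allI)
    fix i
    show "\<exists>ab. i < 4 \<longrightarrow> ((i = 0 \<longrightarrow> fst ab = 1 \<and> snd ab = 0) \<and> (i = 1 \<longrightarrow> fst ab = 0 \<and> snd ab = 1) \<and>
      (\<forall>r<m. real_of_int (A$$(r,c i)) = fst ab * real_of_int (A$$(r,c 0)) + snd ab * real_of_int (A$$(r,c 1))))"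
    proof (cases "i = 0 \<or> i = 1")
      case True
      thus ?thesis by (intro exI[of _ "if i = 0 then (1,0) else (0,1)"], auto)
    next
      case False
      show ?thesis
      proof (cases "i < 4")
        case True
        have "c 0 \<noteq> c 1" "c i \<noteq> c 0" "c i \<noteq> c 1" using cc True False by auto
        from coord[OF K5c[of 0 1] K4c[of i] this] False True
        obtain al be where "\<forall>r<dim_row A. real_of_int (A$$(r,c i)) = al * real_of_int (A$$(r,c 0)) + be * real_of_int (A$$(r,c 1))"
          by auto
        thus ?thesis using False unfolding m_def by (intro exI[of _ "(al,be)"], auto)
      qed auto
    qed
  qed
  from choice[OF this] obtain ABc where ABc: "\<And>i. i < 4 \<Longrightarrow> ((i = 0 \<longrightarrow> fst (ABc i) = 1 \<and> snd (ABc i) = 0) \<and> (i = 1 \<longrightarrow> fst (ABc i) = 0 \<and> snd (ABc i) = 1) \<and>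
      (\<forall>r<m. real_of_int (A$$(r,c i)) = fst (ABc i) * real_of_int (A$$(r,c 0)) + snd (ABc i) * real_of_int (A$$(r,c 1))))"
    by blast
  define al where "al i = fst (ABa i)" for i
  define be where "be i = snd (ABa i)" for i
  define ga where "ga i = fst (ABc i)" for i
  define de where "de i = snd (ABc i)" for i
  define X where "X i j = al i * be j - al j * be i" for i j
  define Y where "Y i j = ga i * de j - ga j * de i" for i j
  have X01: "X 0 1 = 1" using ABa[of 0] ABa[of 1] by (simp add: X_def al_def be_def)
  have Y01: "Y 0 1 = 1" using ABc[of 0] ABc[of 1] by (simp add: Y_def ga_def de_def)
  have PX: "X 0 1 * X 2 3 - X 0 2 * X 1 3 + X 0 3 * X 1 2 = 0" unfolding X_def by (rule plucker)
  have PY: "Y 0 1 * Y 2 3 - Y 0 2 * Y 1 3 + Y 0 3 * Y 1 2 = 0" unfolding Y_def by (rule plucker)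
  have coa: "\<forall>r<dim_row A. real_of_int (A$$(r,a i)) = al i * real_of_int (A$$(r,a 0)) + be i * real_of_int (A$$(r,a 1))"
    if "i < 4" for i using ABa[OF that] unfolding al_def be_def m_def by auto
  have coc: "\<forall>r<dim_row A. real_of_int (A$$(r,c i)) = ga i * real_of_int (A$$(r,c 0)) + de i * real_of_int (A$$(r,c 1))"
    if "i < 4" for i using ABc[OF that] unfolding ga_def de_def m_def by auto
  define q0 where "q0 t = (if t = 0 then a 0 else if t = 1 then a 1 else if t = 2 then c 0 else c 1)" for t :: nat
  define v where "v t r = real_of_int (A $$ (r, q0 t))" for t r
  have vind: "\<forall>t<4. cf t = 0" if h: "\<And>r. r < m \<Longrightarrow> (\<Sum>t<4. cf t * v t r) = 0" for cf
  proof -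
    define c' where "c' j = (if j = a 0 then cf 0 else if j = a 1 then cf 1 else if j = c 0 then cf 2 else cf 3)" for j
    have d: "a 0 \<noteq> a 1" "a 0 \<noteq> c 0" "a 0 \<noteq> c 1" "a 1 \<noteq> c 0" "a 1 \<noteq> c 1" "c 0 \<noteq> c 1"
      using aa ac cc by auto
    have K0: "cols_lin_indep A {a 0, a 1, c 0, c 1}" using K3[of 0 1 0 1] by simp
    have "\<forall>j\<in>{a 0, a 1, c 0, c 1}. c' j = 0"
      using K0 unfolding cols_lin_indep_def
    proof (elim allE impE)
      show "\<forall>i<dim_row A. (\<Sum>j\<in>{a 0, a 1, c 0, c 1}. c' j * real_of_int (A $$ (i, j))) = 0"
      proof (intro allI impI)
        fix i assume "i < dim_row A"
        hence "(\<Sum>t<4. cf t * v t i) = 0" using h m_def by auto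
        thus "(\<Sum>j\<in>{a 0, a 1, c 0, c 1}. c' j * real_of_int (A $$ (i, j))) = 0"
          unfolding sum4' using d by (simp add: c'_def v_def q0_def add.assoc)
      qed
    qed
    hence "cf 0 = 0" "cf 1 = 0" "cf 2 = 0" "cf 3 = 0" using d by (auto simp: c'_def)
    thus ?thesis using less4_cases by auto
  qed
  obtain \<rho> where \<rho>: "inj_on \<rho> {..<4}" "\<rho> ` {..<4} \<subseteq> {..<m}"
    and D: "det (mat 4 4 (\<lambda>(i,t). v t (\<rho> i))) \<noteq> 0"
    using rows_exist[where m=m and k=4 and v=v, OF vind] by blast
  define Dv where "Dv = det (mat 4 4 (\<lambda>(i,t). v t (\<rho> i)))"
  have key: "\<bar>Dv * X i j * Y k l\<bar> = 1 \<or> \<bar>Dv * X i j * Y k l\<bar> = 2"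
    if ij: "i \<noteq> j" "k \<noteq> l" "i < 4" "j < 4" "k < 4" "l < 4" for i j k l
  proof -
    define q where "q t = (if t = 0 then a i else if t = 1 then a j else if t = 2 then c k else c l)" for t :: nat
    define x where "x t = (if t = 0 then al i else al j)" for t :: nat
    define y where "y t = (if t = 0 then be i else be j)" for t :: nat
    define z where "z t = (if t = 2 then ga k else ga l)" for t :: nat
    define w where "w t = (if t = 2 then de k else de l)" for t :: nat
    have rho: "\<rho> r < m" if "r < 4" for r using \<rho>(2) that by auto
    have e1: "det (mat 4 4 (\<lambda>(r,t). (\<lambda>t r. real_of_int (A $$ (r, q t))) t (\<rho> r)))
       = det (mat 4 4 (\<lambda>(r,t). v t (\<rho> r))) * det (Tmat x y z w)"
    proof (rule mat_prod_T[of \<rho> m])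
      show "\<And>i. i < 4 \<Longrightarrow> \<rho> i < m" by (rule rho)
      fix r t :: nat assume r: "r < m"
      { assume t: "t < 2"
        show "real_of_int (A $$ (r, q t)) = x t * v 0 r + y t * v 1 r"
          using t coa[OF ij(3)] coa[OF ij(4)] r unfolding m_def
          by (cases "t = 0", auto simp: q_def x_def y_def v_def q0_def) }
      { assume t: "2 \<le> t" "t < 4"
        show "real_of_int (A $$ (r, q t)) = z t * v 2 r + w t * v 3 r"
          using t coc[OF ij(5)] coc[OF ij(6)] r unfolding m_def
          by (cases "t = 2", auto simp: q_def z_def w_def v_def q0_def) }
    qed
    have dT: "det (Tmat x y z w) = X i j * Y k l"
      unfolding det_Tmat by (simp add: x_def y_def z_def w_def X_def Y_def)
    let ?B = "map_mat real_of_int A"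
    have qinj: "inj_on q {..<4}"
    proof (rule inj_onI)
      fix s t assume "s \<in> {..<4::nat}" "t \<in> {..<4::nat}" "q s = q t"
      thus "s = t" using less4_cases[of s] less4_cases[of t] aa ac cc ij
        by (auto simp: q_def) (metis ac)+
    qed
    have qr: "q ` {..<4} \<subseteq> {..<dim_col ?B}" using an cn ij by (auto simp: q_def n_def)
    have rr: "\<rho> ` {..<4} \<subseteq> {..<dim_row ?B}" using \<rho>(2) by (auto simp: m_def)
    have e2: "mat 4 4 (\<lambda>(r,t). (\<lambda>t r. real_of_int (A $$ (r, q t))) t (\<rho> r)) = mat 4 4 (\<lambda>(r,t). ?B $$ (\<rho> r, q t))"
    proof (rule eq_matI)
      fix i j assume "i < dim_row (mat 4 4 (\<lambda>(r,t). ?B $$ (\<rho> r, q t)))" "j < dim_col (mat 4 4 (\<lambda>(r,t). ?B $$ (\<rho> r, q t)))"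
      hence i: "i < 4" and j: "j < 4" by auto
      hence "\<rho> i < dim_row A" "q j < dim_col A" using qr rr by auto
      thus "mat 4 4 (\<lambda>(r,t). (\<lambda>t r. real_of_int (A $$ (r, q t))) t (\<rho> r)) $$ (i,j) = mat 4 4 (\<lambda>(r,t). ?B $$ (\<rho> r, q t)) $$ (i,j)"
        using i j by simp
    qed auto
    define I where "I = \<rho> ` {..<4}"
    define J where "J = q ` {..<4}"
    have "det (mat 4 4 (\<lambda>(r,t). ?B $$ (\<rho> r, q t))) \<in> {det (submatrix ?B I J), - det (submatrix ?B I J)}"
      unfolding I_def J_def by (rule det_tuple_submatrix[OF \<rho>(1) rr qinj qr])
    hence e3: "\<bar>Dv * X i j * Y k l\<bar> = \<bar>real_of_int (det (submatrix A I J))\<bar>"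
      using e1 e2 dT unfolding Dv_def by (auto simp: submatrix_map mult.assoc)
    have cI: "card I = 4" unfolding I_def using card_image[OF \<rho>(1)] by simp
    have cJ: "card J = 4" unfolding J_def using card_image[OF qinj] by simp
    have "\<bar>det (submatrix A I J)\<bar> \<le> 2"
      using dm rank cI cJ rr qr unfolding delta_modular_def I_def J_def atLeast0LessThan by auto
    moreover have "Dv * X i j * Y k l \<noteq> 0"
    proof -
      have "X i j \<noteq> 0" unfolding X_def
        by (rule X_nonzero[OF K5a[OF ij(3,4)] _ coa[OF ij(3)] coa[OF ij(4)]], insert aa ij, auto)
      moreover have "Y k l \<noteq> 0" unfolding Y_def
        by (rule X_nonzero[OF K5c[OF ij(5,6)] _ coc[OF ij(5)] coc[OF ij(6)]], insert cc ij, auto)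
      ultimately show ?thesis using D Dv_def by simp
    qed
    ultimately have z: "\<bar>det (submatrix A I J)\<bar> \<le> 2" "det (submatrix A I J) \<noteq> 0" using e3 by auto
    hence "\<bar>det (submatrix A I J)\<bar> = 1 \<or> \<bar>det (submatrix A I J)\<bar> = 2" by linarith
    hence "\<bar>real_of_int (det (submatrix A I J))\<bar> = 1 \<or> \<bar>real_of_int (det (submatrix A I J))\<bar> = 2"
      by (metis of_int_1 of_int_abs of_int_numeral)
    thus ?thesis using e3 by simp
  qed
  show False by (rule arith_core[OF X01 Y01 key PX PY])
qed



definition ent :: "nat \<Rightarrow> nat \<Rightarrow> nat \<Rightarrow> int" where
  "ent r i j = (if r = 2 then (if i = 0 then (if j = 1 then 0 else 1) else (if j = 0 then 0 else if j = 3 then -1 else 1)) else 1)"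

definition sideind :: "nat \<Rightarrow> nat \<Rightarrow> nat set \<Rightarrow> bool" where
  "sideind r off Z \<longleftrightarrow> (\<forall>c::nat\<Rightarrow>real. (\<forall>i<r. (\<Sum>j\<in>Z. c j * real_of_int (ent r i (j - off))) = 0) \<longrightarrow> (\<forall>j\<in>Z. c j = 0))"

lemma sideind_shift:
  assumes Z: "Z \<subseteq> {off..}"
  shows "sideind r off Z \<longleftrightarrow> sideind r 0 ((\<lambda>j. j - off) ` Z)"
proof -
  have inj: "inj_on (\<lambda>j. j - off) Z"
  proof (rule inj_onI)
    fix x y assume xy: "x \<in> Z" "y \<in> Z" "x - off = y - off"
    have "off \<le> x" "off \<le> y" using Z xy by auto
    thus "x = y" using xy by arith
  qed
  have bk: "\<And>j. j \<in> Z \<Longrightarrow> (\<lambda>j. j - off) j + off = j" using Z by auto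
  show ?thesis
  proof
    assume h: "sideind r off Z"
    show "sideind r 0 ((\<lambda>j. j - off) ` Z)" unfolding sideind_def
    proof (intro allI impI)
      fix c :: "nat \<Rightarrow> real"
      assume hc: "\<forall>i<r. (\<Sum>j\<in>(\<lambda>j. j - off) ` Z. c j * real_of_int (ent r i (j - 0))) = 0"
      have "\<forall>j\<in>Z. c (j - off) = 0"
        using h unfolding sideind_def
      proof (elim allE impE)
        show "\<forall>i<r. (\<Sum>j\<in>Z. c (j - off) * real_of_int (ent r i (j - off))) = 0"
          using hc by (simp add: sum.reindex[OF inj])
      qed
      thus "\<forall>j\<in>(\<lambda>j. j - off) ` Z. c j = 0" by auto
    qed
  next
    assume h: "sideind r 0 ((\<lambda>j. j - off) ` Z)"
    show "sideind r off Z" unfolding sideind_def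
    proof (intro allI impI)
      fix c :: "nat \<Rightarrow> real"
      assume hc: "\<forall>i<r. (\<Sum>j\<in>Z. c j * real_of_int (ent r i (j - off))) = 0"
      have "\<forall>j\<in>(\<lambda>j. j - off) ` Z. c (j + off) = 0"
        using h unfolding sideind_def
      proof (elim allE impE)
        show "\<forall>i<r. (\<Sum>j\<in>(\<lambda>j. j - off) ` Z. c (j + off) * real_of_int (ent r i (j - 0))) = 0"
          using hc bk by (simp add: sum.reindex[OF inj])
      qed
      thus "\<forall>j\<in>Z. c j = 0" using bk by force
    qed
  qed
qed

lemma sideind0: "sideind 0 0 Z \<longleftrightarrow> Z = {}"
proof
  assume h: "sideind 0 0 Z"
  have "\<forall>j\<in>Z. (\<lambda>_. 1::real) j = 0" using h unfolding sideind_def by (elim allE impE, simp)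
  thus "Z = {}" by auto
qed (auto simp: sideind_def)

lemma sideind1: assumes "finite Z" shows "sideind 1 0 Z \<longleftrightarrow> card Z \<le> 1"
proof
  assume h: "sideind 1 0 Z"
  show "card Z \<le> 1"
  proof (rule ccontr)
    assume "\<not> card Z \<le> 1"
    then obtain p q where pq: "p \<in> Z" "q \<in> Z" "p \<noteq> q"
      using card_le_Suc0_iff_eq[OF assms] by auto
    define c where "c j = (if j = p then 1 else if j = q then -1 else (0::real))" for j
    have "(\<Sum>j\<in>Z. c j * real_of_int (ent 1 0 (j - 0))) = (\<Sum>j\<in>Z. (if j = p then 1 else 0) - (if j = q then 1 else 0))"
      by (rule sum.cong, auto simp: c_def ent_def pq)
    also have "\<dots> = 0" using pq assms by (simp add: sum_subtractf sum.delta)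
    finally have "\<forall>j\<in>Z. c j = 0" using h unfolding sideind_def by (elim allE impE, simp)
    thus False using pq by (auto simp: c_def)
  qed
next
  assume "card Z \<le> 1"
  hence all: "\<forall>x\<in>Z. \<forall>y\<in>Z. x = y" using card_le_Suc0_iff_eq[OF assms] by simp
  have "Z = {} \<or> (\<exists>p. Z = {p})"
  proof (cases "Z = {}")
    case False then obtain p where "p \<in> Z" by auto
    hence "Z = {p}" using all by auto
    thus ?thesis by auto
  qed auto
  thus "sideind 1 0 Z" by (auto simp: sideind_def ent_def)
qed

lemma pal_det: assumes "p < 4" "q < 4" "p \<noteq> q"
  shows "ent 2 0 p * ent 2 1 q - ent 2 0 q * ent 2 1 p \<noteq> 0"
  using less4_cases[OF assms(1)] less4_cases[OF assms(2)] assms(3) by (auto simp: ent_def)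

lemma sideind2_le: assumes Z: "Z \<subseteq> {0..<4}" and c2: "card Z \<le> 2" shows "sideind 2 0 Z"
proof -
  have f: "finite Z" using Z finite_subset by blast
  have "Z = {} \<or> (\<exists>p. Z = {p}) \<or> (\<exists>p q. p \<noteq> q \<and> Z = {p,q})"
  proof (cases "card Z")
    case 0 thus ?thesis using f by auto
  next
    case (Suc k)
    show ?thesis
    proof (cases k)
      case 0
      hence "card Z = 1" using Suc by simp
      then obtain x where "Z = {x}" by (rule card_1_singletonE)
      thus ?thesis by blast
    next
      case (Suc k')
      hence "card Z = 2" using c2 \<open>card Z = Suc k\<close> by simp
      then obtain x y where "Z = {x,y}" "x \<noteq> y" unfolding card_2_iff by blast
      thus ?thesis by blast
    qed
  qed
  thus ?thesis
  proof (elim disjE exE conjE)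
    assume "Z = {}" thus ?thesis by (simp add: sideind_def)
  next
    fix p assume Zp: "Z = {p}"
    hence p: "p < 4" using Z by auto
    show ?thesis unfolding sideind_def Zp
    proof (intro allI impI)
      fix c :: "nat \<Rightarrow> real" assume h: "\<forall>i<2. (\<Sum>j\<in>{p}. c j * real_of_int (ent 2 i (j - 0))) = 0"
      have "c p * real_of_int (ent 2 0 p) = 0" "c p * real_of_int (ent 2 1 p) = 0" using h by auto
      moreover have "ent 2 0 p \<noteq> 0 \<or> ent 2 1 p \<noteq> 0" by (auto simp: ent_def)
      ultimately show "\<forall>j\<in>{p}. c j = 0" by auto
    qed
  next
    fix p q assume pq: "p \<noteq> q" and Zpq: "Z = {p,q}"
    hence p: "p < 4" and q: "q < 4" using Z by auto
    show ?thesis unfolding sideind_def Zpq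
    proof (intro allI impI)
      fix c :: "nat \<Rightarrow> real" assume h: "\<forall>i<2. (\<Sum>j\<in>{p,q}. c j * real_of_int (ent 2 i (j - 0))) = 0"
      let ?e = "\<lambda>i j. real_of_int (ent 2 i j)"
      have "c p * real_of_int (ent 2 0 p) + c q * real_of_int (ent 2 0 q) = 0"
           "c p * real_of_int (ent 2 1 p) + c q * real_of_int (ent 2 1 q) = 0" using h pq by auto
      hence e: "c p * ?e 0 p + c q * ?e 0 q = 0" "c p * ?e 1 p + c q * ?e 1 q = 0" by auto
      define dd where "dd = ent 2 0 p * ent 2 1 q - ent 2 0 q * ent 2 1 p"
      have "dd \<noteq> 0" using pal_det[OF p q pq] by (simp add: dd_def)
      hence "real_of_int dd \<noteq> 0" by simp
      moreover have "real_of_int dd = ?e 0 p * ?e 1 q - ?e 0 q * ?e 1 p" by (simp add: dd_def)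
      ultimately have dn: "?e 0 p * ?e 1 q - ?e 0 q * ?e 1 p \<noteq> 0" by simp
      have "c p * (?e 0 p * ?e 1 q - ?e 0 q * ?e 1 p) = (c p * ?e 0 p + c q * ?e 0 q) * ?e 1 q - (c p * ?e 1 p + c q * ?e 1 q) * ?e 0 q"
        by (simp add: algebra_simps)
      hence "c p = 0" using e dn by simp
      moreover have "c q * (?e 0 p * ?e 1 q - ?e 0 q * ?e 1 p) = (c p * ?e 1 p + c q * ?e 1 q) * ?e 0 p - (c p * ?e 0 p + c q * ?e 0 q) * ?e 1 p"
        by (simp add: algebra_simps)
      hence "c q = 0" using e dn by simp
      ultimately show "\<forall>j\<in>{p,q}. c j = 0" by auto
    qed
  qed
qed



lemma sideind2_gt: assumes Z: "Z \<subseteq> {0..<4}" and c3: "\<not> card Z \<le> 2" shows "\<not> sideind 2 0 Z"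
proof
  assume h: "sideind 2 0 Z"
  have f: "finite Z" using Z finite_subset by blast
  obtain T where T: "T \<subseteq> Z" "card T = 3" using obtain_subset_with_card_n[of 3 Z] c3 by auto
  have "\<exists>x. x < 4 \<and> x \<notin> T"
  proof (rule ccontr)
    assume "\<not> ?thesis" hence "{0..<4} \<subseteq> T" by auto
    hence "card {0..<4::nat} \<le> card T" using T Z f by (intro card_mono) (auto intro: finite_subset)
    thus False using T by simp
  qed
  then obtain x where x: "x < 4" "x \<notin> T" by auto
  have ZT: "{0..<4} - {x} \<subseteq> Z"
  proof -
    have "T \<subseteq> {0..<4} - {x}" using T Z x by auto
    moreover have "card ({0..<4} - {x}) = 3" using x by simp
    ultimately have "T = {0..<4} - {x}" using T by (intro card_subset_eq) auto
    thus ?thesis using T by auto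
  qed
  define coef where "coef (j::nat) = (if x = 3 then (if j = 0 then 1 else if j = 1 then 1 else if j = 2 then -1 else 0)
     else if x = 2 then (if j = 0 then 1 else if j = 1 then -1 else if j = 3 then -1 else 0)
     else if x = 1 then (if j = 0 then 2 else if j = 2 then -1 else if j = 3 then -1 else 0)
     else (if j = 1 then 2 else if j = 2 then -1 else if j = 3 then 1 else (0::real)))" for j
  have cx: "coef j = 0" if "j \<notin> Z" "j < 4" for j
  proof -
    have "j = x" using ZT that by auto
    thus ?thesis using less4_cases[OF x(1)] by (auto simp: coef_def)
  qed
  have sums: "(\<Sum>j\<in>Z. coef j * real_of_int (ent 2 i (j - 0))) = (\<Sum>j = 0..<4. coef j * real_of_int (ent 2 i j))" for i
  proof -
    have "(\<Sum>j\<in>Z. coef j * real_of_int (ent 2 i (j - 0))) = (\<Sum>j\<in>Z. coef j * real_of_int (ent 2 i j))" by simp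
    also have "\<dots> = (\<Sum>j = 0..<4. coef j * real_of_int (ent 2 i j))"
      by (rule sum.mono_neutral_left, simp, rule Z, insert cx, auto)
    finally show ?thesis .
  qed
  have "\<forall>i<2. (\<Sum>j\<in>Z. coef j * real_of_int (ent 2 i (j - 0))) = 0"
  proof (intro allI impI)
    fix i :: nat assume "i < 2"
    hence "i = 0 \<or> i = 1" by auto
    thus "(\<Sum>j\<in>Z. coef j * real_of_int (ent 2 i (j - 0))) = 0"
      unfolding sums sum4 using less4_cases[OF x(1)] by (elim disjE) (simp_all add: coef_def ent_def)
  qed
  hence z: "\<forall>j\<in>Z. coef j = 0" using h unfolding sideind_def by blast
  have "\<exists>j\<in>Z. coef j \<noteq> 0"
  proof -
    have "(if x = 0 then 1 else 0) \<in> Z" using ZT x by auto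
    moreover have "coef (if x = 0 then 1 else 0) \<noteq> 0" using less4_cases[OF x(1)] by (auto simp: coef_def)
    ultimately show ?thesis by blast
  qed
  thus False using z by blast
qed



definition Amat :: "nat \<Rightarrow> nat \<Rightarrow> nat \<Rightarrow> nat \<Rightarrow> int mat" where
  "Amat rL nL rR nR = mat (rL+rR) (nL+nR) (\<lambda>(i,j). if j < nL then (if i < rL then ent rL i j else 0)
      else (if i < rL then 0 else ent rR (i - rL) (j - nL)))"

lemma Amat_dims[simp]: "dim_row (Amat rL nL rR nR) = rL + rR" "dim_col (Amat rL nL rR nR) = nL + nR"
  by (simp_all add: Amat_def)

lemma row_sum_Amat:
  assumes Y: "Y \<subseteq> {0..<nL+nR}" and i: "i < rL + rR"
  shows "(\<Sum>j\<in>Y. c j * real_of_int (Amat rL nL rR nR $$ (i,j))) =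
    (if i < rL then (\<Sum>j\<in>Y \<inter> {..<nL}. c j * real_of_int (ent rL i (j - 0)))
     else (\<Sum>j\<in>Y \<inter> {nL..}. c j * real_of_int (ent rR (i - rL) (j - nL))))"
proof -
  have fY: "finite Y" using Y finite_subset by blast
  have split: "Y = (Y \<inter> {..<nL}) \<union> (Y \<inter> {nL..})" by auto
  have "(\<Sum>j\<in>Y. c j * real_of_int (Amat rL nL rR nR $$ (i,j)))
    = (\<Sum>j\<in>Y \<inter> {..<nL}. c j * real_of_int (Amat rL nL rR nR $$ (i,j))) + (\<Sum>j\<in>Y \<inter> {nL..}. c j * real_of_int (Amat rL nL rR nR $$ (i,j)))"
    by (subst split, rule sum.union_disjoint, insert fY, auto)
  also have "(\<Sum>j\<in>Y \<inter> {..<nL}. c j * real_of_int (Amat rL nL rR nR $$ (i,j)))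
     = (if i < rL then (\<Sum>j\<in>Y \<inter> {..<nL}. c j * real_of_int (ent rL i (j - 0))) else 0)"
    using Y i by (auto simp: Amat_def intro!: sum.neutral sum.cong)
  also have "(\<Sum>j\<in>Y \<inter> {nL..}. c j * real_of_int (Amat rL nL rR nR $$ (i,j)))
     = (if i < rL then 0 else (\<Sum>j\<in>Y \<inter> {nL..}. c j * real_of_int (ent rR (i - rL) (j - nL))))"
    using Y i by (auto simp: Amat_def intro!: sum.neutral sum.cong)
  finally show ?thesis by simp
qed

lemma indep_Amat:
  assumes Y: "Y \<subseteq> {0..<nL+nR}"
  shows "cols_lin_indep (Amat rL nL rR nR) Y \<longleftrightarrow> sideind rL 0 (Y \<inter> {..<nL}) \<and> sideind rR nL (Y \<inter> {nL..})"
proof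
  assume h: "cols_lin_indep (Amat rL nL rR nR) Y"
  show "sideind rL 0 (Y \<inter> {..<nL}) \<and> sideind rR nL (Y \<inter> {nL..})"
  proof
    show "sideind rL 0 (Y \<inter> {..<nL})" unfolding sideind_def
    proof (intro allI impI)
      fix c :: "nat \<Rightarrow> real"
      assume hc: "\<forall>i<rL. (\<Sum>j\<in>Y \<inter> {..<nL}. c j * real_of_int (ent rL i (j - 0))) = 0"
      define c' where "c' j = (if j < nL then c j else 0)" for j
      have "\<forall>j\<in>Y. c' j = 0" using h unfolding cols_lin_indep_def
      proof (elim allE impE)
        show "\<forall>i<dim_row (Amat rL nL rR nR). (\<Sum>j\<in>Y. c' j * real_of_int (Amat rL nL rR nR $$ (i, j))) = 0"
        proof (intro allI impI)
          fix i assume "i < dim_row (Amat rL nL rR nR)"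
          hence i: "i < rL + rR" by simp
          show "(\<Sum>j\<in>Y. c' j * real_of_int (Amat rL nL rR nR $$ (i, j))) = 0"
            unfolding row_sum_Amat[OF Y i] using hc by (auto simp: c'_def intro!: sum.neutral)
        qed
      qed
      thus "\<forall>j\<in>Y \<inter> {..<nL}. c j = 0" by (auto simp: c'_def)
    qed
    show "sideind rR nL (Y \<inter> {nL..})" unfolding sideind_def
    proof (intro allI impI)
      fix c :: "nat \<Rightarrow> real"
      assume hc: "\<forall>i<rR. (\<Sum>j\<in>Y \<inter> {nL..}. c j * real_of_int (ent rR i (j - nL))) = 0"
      define c' where "c' j = (if j < nL then 0 else c j)" for j
      have "\<forall>j\<in>Y. c' j = 0" using h unfolding cols_lin_indep_def
      proof (elim allE impE)
        show "\<forall>i<dim_row (Amat rL nL rR nR). (\<Sum>j\<in>Y. c' j * real_of_int (Amat rL nL rR nR $$ (i, j))) = 0"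
        proof (intro allI impI)
          fix i assume "i < dim_row (Amat rL nL rR nR)"
          hence i: "i < rL + rR" by simp
          show "(\<Sum>j\<in>Y. c' j * real_of_int (Amat rL nL rR nR $$ (i, j))) = 0"
          proof (cases "i < rL")
            case True
            thus ?thesis unfolding row_sum_Amat[OF Y i] by (auto simp: c'_def intro!: sum.neutral)
          next
            case False
            hence "i - rL < rR" using i by simp
            hence "(\<Sum>j\<in>Y \<inter> {nL..}. c j * real_of_int (ent rR (i - rL) (j - nL))) = 0" using hc by blast
            moreover have "(\<Sum>j\<in>Y \<inter> {nL..}. c' j * real_of_int (ent rR (i - rL) (j - nL))) = (\<Sum>j\<in>Y \<inter> {nL..}. c j * real_of_int (ent rR (i - rL) (j - nL)))"
              by (rule sum.cong, auto simp: c'_def)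
            ultimately show ?thesis unfolding row_sum_Amat[OF Y i] using False by simp
          qed
        qed
      qed
      thus "\<forall>j\<in>Y \<inter> {nL..}. c j = 0" by (auto simp: c'_def)
    qed
  qed
next
  assume h: "sideind rL 0 (Y \<inter> {..<nL}) \<and> sideind rR nL (Y \<inter> {nL..})"
  show "cols_lin_indep (Amat rL nL rR nR) Y" unfolding cols_lin_indep_def
  proof (intro allI impI)
    fix c :: "nat \<Rightarrow> real"
    assume hc: "\<forall>i<dim_row (Amat rL nL rR nR). (\<Sum>j\<in>Y. c j * real_of_int (Amat rL nL rR nR $$ (i, j))) = 0"
    have hL: "sideind rL 0 (Y \<inter> {..<nL})" and hR: "sideind rR nL (Y \<inter> {nL..})" using h by auto
    have L: "\<forall>j\<in>Y \<inter> {..<nL}. c j = 0" using hL unfolding sideind_def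
    proof (elim allE impE)
      show "\<forall>i<rL. (\<Sum>j\<in>Y \<inter> {..<nL}. c j * real_of_int (ent rL i (j - 0))) = 0"
      proof (intro allI impI)
        fix i assume i: "i < rL"
        hence i': "i < rL + rR" by simp
        show "(\<Sum>j\<in>Y \<inter> {..<nL}. c j * real_of_int (ent rL i (j - 0))) = 0"
          using hc[rule_format, of i] i' i unfolding row_sum_Amat[OF Y i'] by simp
      qed
    qed
    have R: "\<forall>j\<in>Y \<inter> {nL..}. c j = 0" using hR unfolding sideind_def
    proof (elim allE impE)
      show "\<forall>i<rR. (\<Sum>j\<in>Y \<inter> {nL..}. c j * real_of_int (ent rR i (j - nL))) = 0"
      proof (intro allI impI)
        fix i assume i: "i < rR"
        hence i': "rL + i < rL + rR" by simp
        show "(\<Sum>j\<in>Y \<inter> {nL..}. c j * real_of_int (ent rR i (j - nL))) = 0"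
          using hc[rule_format, of "rL + i"] i' unfolding row_sum_Amat[OF Y i'] by simp
      qed
    qed
    show "\<forall>j\<in>Y. c j = 0"
    proof
      fix j assume "j \<in> Y" thus "c j = 0" using L R by (cases "j < nL") auto
    qed
  qed
qed

lemma sideind_char: assumes Z: "Z \<subseteq> {0..<4}" and r: "r \<le> 2"
  shows "sideind r 0 Z \<longleftrightarrow> card Z \<le> r"
proof -
  have f: "finite Z" using Z finite_subset by blast
  have "r = 0 \<or> r = 1 \<or> r = 2" using r by auto
  thus ?thesis
  proof (elim disjE)
    assume "r = 0" thus ?thesis using sideind0 f by (simp add: card_eq_0_iff)
  next
    assume "r = 1" thus ?thesis using sideind1[OF f] by simp
  next
    assume "r = 2" thus ?thesis using sideind2_le[OF Z] sideind2_gt[OF Z] by blast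
  qed
qed

lemma indep_Amat_card:
  assumes Y: "Y \<subseteq> {0..<nL+nR}" and r: "rL \<le> 2" "rR \<le> 2" and n: "nL \<le> 4" "nR \<le> 4"
  shows "cols_lin_indep (Amat rL nL rR nR) Y \<longleftrightarrow> card (Y \<inter> {..<nL}) \<le> rL \<and> card (Y \<inter> {nL..}) \<le> rR"
proof -
  have L: "sideind rL 0 (Y \<inter> {..<nL}) \<longleftrightarrow> card (Y \<inter> {..<nL}) \<le> rL"
    by (rule sideind_char, insert n r, auto)
  have inj: "inj_on (\<lambda>j. j - nL) (Y \<inter> {nL..})" by (rule inj_onI, auto)
  have R: "sideind rR nL (Y \<inter> {nL..}) \<longleftrightarrow> card (Y \<inter> {nL..}) \<le> rR"
  proof -
    have "sideind rR nL (Y \<inter> {nL..}) \<longleftrightarrow> sideind rR 0 ((\<lambda>j. j - nL) ` (Y \<inter> {nL..}))"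
      by (rule sideind_shift, auto)
    also have "\<dots> \<longleftrightarrow> card ((\<lambda>j. j - nL) ` (Y \<inter> {nL..})) \<le> rR"
      by (rule sideind_char, insert Y n r, auto)
    also have "card ((\<lambda>j. j - nL) ` (Y \<inter> {nL..})) = card (Y \<inter> {nL..})" by (rule card_image[OF inj])
    finally show ?thesis .
  qed
  show ?thesis unfolding indep_Amat[OF Y] L R ..
qed



lemma card_split_nat: fixes Y :: "nat set" and b :: nat assumes "finite Y" shows "card Y = card (Y \<inter> {..<b}) + card (Y \<inter> {b..})"
proof -
  have "Y = (Y \<inter> {..<b}) \<union> (Y \<inter> {b..})" by auto
  hence "card Y = card ((Y \<inter> {..<b}) \<union> (Y \<inter> {b..}))" by simp
  also have "\<dots> = card (Y \<inter> {..<b}) + card (Y \<inter> {b..})" by (rule card_Un_disjoint, insert assms, auto)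
  finally show ?thesis .
qed

lemma rank_Amat:
  assumes r: "rL \<le> 2" "rR \<le> 2" and n: "nL \<le> 4" "nR \<le> 4" and rn: "rL \<le> nL" "rR \<le> nR"
  shows "mat_rank (Amat rL nL rR nR) = rL + rR"
proof -
  let ?S = "{card X | X. X \<subseteq> {0..<dim_col (Amat rL nL rR nR)} \<and> cols_lin_indep (Amat rL nL rR nR) X}"
  have fin: "finite ?S" by (rule finite_subset[of _ "card ` Pow {0..<dim_col (Amat rL nL rR nR)}"], auto)
  have ub: "x \<le> rL + rR" if "x \<in> ?S" for x
  proof -
    from that obtain X where X: "X \<subseteq> {0..<nL+nR}" "cols_lin_indep (Amat rL nL rR nR) X" "x = card X" by auto
    have f: "finite X" using X(1) finite_subset by blast
    show ?thesis using X indep_Amat_card[OF X(1) r n] card_split_nat[OF f, of nL] by simp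
  qed
  let ?Y = "{0..<rL} \<union> {nL..<nL+rR}"
  have Y: "?Y \<subseteq> {0..<nL+nR}" using rn by auto
  have yl: "?Y \<inter> {..<nL} = {0..<rL}" using rn by auto
  have yr: "?Y \<inter> {nL..} = {nL..<nL+rR}" using rn by auto
  have "cols_lin_indep (Amat rL nL rR nR) ?Y" unfolding indep_Amat_card[OF Y r n] yl yr by simp
  moreover have "card ?Y = rL + rR" using card_split_nat[of ?Y nL] yl yr by simp
  ultimately have "rL + rR \<in> ?S" unfolding mem_Collect_eq using Y by (intro exI[of _ ?Y]) simp
  thus ?thesis unfolding mat_rank_def using fin ub by (intro Max_eqI) auto
qed

lemma side_det:
  assumes r: "r \<le> 2" and mono: "r = 2 \<Longrightarrow> p 0 < p 1" and pn: "\<And>t. t < r \<Longrightarrow> p t < ns" and ns: "ns \<le> 4"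
  shows "\<bar>det (mat r r (\<lambda>(i,t). ent r i (p t)))\<bar> \<le> (if r = 2 \<and> ns = 4 then 2 else 1)"
proof -
  have "r = 0 \<or> r = 1 \<or> r = 2" using r by auto
  thus ?thesis
  proof (elim disjE)
    assume "r = 0" thus ?thesis by (simp add: det_dim_zero)
  next
    assume "r = 1" thus ?thesis by (subst det_single, auto simp: ent_def)
  next
    assume r2: "r = 2"
    have d: "det (mat r r (\<lambda>(i,t). ent r i (p t))) = ent 2 0 (p 0) * ent 2 1 (p 1) - ent 2 0 (p 1) * ent 2 1 (p 0)"
      unfolding r2 by (subst det2, auto)
    have p0: "p 0 < 4" and p1: "p 1 < 4" and lt: "p 0 < p 1" and p1n: "p 1 < ns" using pn[of 0] pn[of 1] ns mono r2 by auto
    have "\<bar>ent 2 0 (p 0) * ent 2 1 (p 1) - ent 2 0 (p 1) * ent 2 1 (p 0)\<bar> \<le> 1 \<or>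
      (p 1 = 3 \<and> \<bar>ent 2 0 (p 0) * ent 2 1 (p 1) - ent 2 0 (p 1) * ent 2 1 (p 0)\<bar> \<le> 2)"
      using less4_cases[OF p0] less4_cases[OF p1] lt by (elim disjE; simp add: ent_def)
    moreover have "p 1 = 3 \<Longrightarrow> ns = 4" using p1n ns by simp
    ultimately show ?thesis unfolding d using r2 by auto
  qed
qed



lemma delta_Amat:
  assumes r: "rL \<le> 2" "rR \<le> 2" and n: "nL \<le> 4" "nR \<le> 4" and rn: "rL \<le> nL" "rR \<le> nR"
  and small: "\<not> (rL = 2 \<and> nL = 4) \<or> \<not> (rR = 2 \<and> nR = 4)"
  shows "delta_modular 2 (Amat rL nL rR nR)"
  unfolding delta_modular_def rank_Amat[OF r n rn]
proof (intro allI impI, elim conjE)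
  fix I J
  assume I: "I \<subseteq> {0..<dim_row (Amat rL nL rR nR)}" and J: "J \<subseteq> {0..<dim_col (Amat rL nL rR nR)}"
    and cI: "card I = rL + rR" and cJ: "card J = rL + rR"
  let ?A = "Amat rL nL rR nR"
  let ?r = "rL + rR"
  have I0: "I = {0..<?r}" using I cI by (intro card_subset_eq) auto
  have fJ: "finite J" using J finite_subset by blast
  show "\<bar>det (submatrix ?A I J)\<bar> \<le> 2"
  proof (cases "cols_lin_indep ?A J")
    case False
    thus ?thesis using dep_det0[OF J False] by simp
  next
    case True
    have J': "J \<subseteq> {0..<nL+nR}" using J by simp
    have ind: "card (J \<inter> {..<nL}) \<le> rL" "card (J \<inter> {nL..}) \<le> rR"
      using True indep_Amat_card[OF J' r n] by auto
    have cL: "card (J \<inter> {..<nL}) = rL" and cR: "card (J \<inter> {nL..}) = rR"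
      using ind card_split_nat[OF fJ, of nL] cJ by auto
    have setL: "{a \<in> J. a < nL} = J \<inter> {..<nL}" by auto
    have pl: "pick J t < nL \<longleftrightarrow> t < rL" if t: "t < ?r" for t
      using pick_lt_iff[OF fJ, of t nL] t cJ cL setL by simp
    have pn: "pick J t < nL + nR" if t: "t < ?r" for t
      using pick_in_set_le[of t J] t cJ J' by auto
    have pmono: "pick J s < pick J t" if "s < t" "t < ?r" for s t
      using pick_mono_le[of t J s] that cJ by simp
    define S1 where "S1 = mat rL rL (\<lambda>(i,t). ent rL i (pick J t))"
    define S2 where "S2 = mat rR rR (\<lambda>(i,t). ent rR i (pick J (rL + t) - nL))"
    have cardI: "card {i. i < dim_row ?A \<and> i \<in> I} = ?r" using I0 by simp
    have cardJ: "card {j. j < dim_col ?A \<and> j \<in> J} = ?r"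
    proof -
      have "{j. j < dim_col ?A \<and> j \<in> J} = J" using J by auto
      thus ?thesis using cJ by simp
    qed
    have sub: "submatrix ?A I J = four_block_mat S1 (0\<^sub>m rL rR) (0\<^sub>m rR rL) S2"
    proof (rule eq_matI)
      show "dim_row (submatrix ?A I J) = dim_row (four_block_mat S1 (0\<^sub>m rL rR) (0\<^sub>m rR rL) S2)"
        using cardI by (simp add: dim_submatrix S1_def S2_def)
      show "dim_col (submatrix ?A I J) = dim_col (four_block_mat S1 (0\<^sub>m rL rR) (0\<^sub>m rR rL) S2)"
        using cardJ by (simp add: dim_submatrix S1_def S2_def)
      fix i t assume "i < dim_row (four_block_mat S1 (0\<^sub>m rL rR) (0\<^sub>m rR rL) S2)"
        "t < dim_col (four_block_mat S1 (0\<^sub>m rL rR) (0\<^sub>m rR rL) S2)"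
      hence i: "i < ?r" and t: "t < ?r" by (simp_all add: S1_def S2_def)
      have e: "submatrix ?A I J $$ (i,t) = ?A $$ (i, pick J t)"
        using submatrix_index[of i ?A I t J] cardI cardJ i t I0 pick_atLeast0[OF i] by simp
      show "submatrix ?A I J $$ (i,t) = four_block_mat S1 (0\<^sub>m rL rR) (0\<^sub>m rR rL) S2 $$ (i,t)"
        unfolding e using i t pl[OF t] pn[OF t]
        by (cases "i < rL"; cases "t < rL", auto simp: Amat_def S1_def S2_def)
    qed
    have S1c: "S1 \<in> carrier_mat rL rL" and S2c: "S2 \<in> carrier_mat rR rR" by (simp_all add: S1_def S2_def)
    have ddet: "det (submatrix ?A I J) = det S1 * det S2"
      unfolding sub by (rule det_four_block_mat_upper_right_zero[OF S1c], auto simp: S2_def)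
    have d1: "\<bar>det S1\<bar> \<le> (if rL = 2 \<and> nL = 4 then 2 else 1)"
      unfolding S1_def
    proof (rule side_det[OF r(1) _ _ n(1)])
      show "rL = 2 \<Longrightarrow> pick J 0 < pick J 1" using pmono[of 0 1] by simp
      show "\<And>t. t < rL \<Longrightarrow> pick J t < nL" using pl by simp
    qed
    have d2: "\<bar>det S2\<bar> \<le> (if rR = 2 \<and> nR = 4 then 2 else 1)"
      unfolding S2_def
    proof (rule side_det[OF r(2) _ _ n(2)])
      show "rR = 2 \<Longrightarrow> pick J (rL + 0) - nL < pick J (rL + 1) - nL"
        using pmono[of "rL" "rL+1"] pl[of rL] by simp
      fix t assume t: "t < rR"
      hence "rL + t < ?r" by simp
      hence "\<not> pick J (rL + t) < nL" "pick J (rL + t) < nL + nR" using pl[of "rL + t"] pn[of "rL + t"] by auto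
      thus "pick J (rL + t) - nL < nR" by arith
    qed
    have "\<bar>det S1\<bar> * \<bar>det S2\<bar> \<le> 2"
    proof (cases "rL = 2 \<and> nL = 4")
      case True
      hence "\<bar>det S2\<bar> \<le> 1" using small d2 by auto
      moreover have "\<bar>det S1\<bar> \<le> 2" using d1 True by simp
      ultimately show ?thesis by (metis abs_ge_zero mult_mono mult.right_neutral order_trans)
    next
      case False
      hence "\<bar>det S1\<bar> \<le> 1" using d1 by auto
      moreover have "\<bar>det S2\<bar> \<le> 2" using d2 by (auto split: if_splits)
      ultimately show ?thesis by (metis abs_ge_zero mult_mono mult.left_neutral order_trans)
    qed
    thus ?thesis unfolding ddet by (simp add: abs_mult)
  qed
qed



lemma minor_in_M2:
  assumes C: "C \<subseteq> G0" and D: "D \<subseteq> G0" and CD: "C \<union> D \<noteq> {}"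
  shows "in_M2 (minor_of M0 C D)"
proof -
  define E where "E = G0 - C - D"
  define EL where "EL = Inl -` E"
  define ER where "ER = Inr -` E"
  have EL4: "EL \<subseteq> {0..<4}" and ER4: "ER \<subseteq> {0..<4}" unfolding EL_def ER_def E_def by auto
  have fEL: "finite EL" and fER: "finite ER" using EL4 ER4 finite_subset by blast+
  define nL where "nL = card EL"
  define nR where "nR = card ER"
  have nL4: "nL \<le> 4" using card_mono[OF _ EL4] unfolding nL_def by simp
  have nR4: "nR \<le> 4" using card_mono[OF _ ER4] unfolding nR_def by simp
  define aL where "aL = 2 - card (Inl -` C)"
  define aR where "aR = 2 - card (Inr -` C)"
  define rL where "rL = min aL nL"
  define rR where "rR = min aR nR"
  have r2: "rL \<le> 2" "rR \<le> 2" unfolding rL_def rR_def aL_def aR_def by auto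
  have rn: "rL \<le> nL" "rR \<le> nR" unfolding rL_def rR_def by auto
  have small: "\<not> (rL = 2 \<and> nL = 4) \<or> \<not> (rR = 2 \<and> nR = 4)"
  proof (rule ccontr)
    assume "\<not> ?thesis"
    hence h: "rL = 2" "nL = 4" "rR = 2" "nR = 4" by auto
    have fC: "finite C" using C finite_G0_sub by blast
    have "card (Inl -` C) = 0" using h(1) unfolding rL_def aL_def by auto
    hence CL: "Inl -` C = {}" using fC by (simp add: finite_vimageI)
    have "card (Inr -` C) = 0" using h(3) unfolding rR_def aR_def by auto
    hence CR: "Inr -` C = {}" using fC by (simp add: finite_vimageI)
    have EL0: "EL = {0..<4}" using EL4 h(2) unfolding nL_def by (intro card_subset_eq) auto
    have DL: "Inl -` D = {}"
    proof -
      { fix x assume xD: "Inl x \<in> D"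
        hence "x < 4" using D by auto
        hence "x \<in> EL" using EL0 by simp
        hence False using xD unfolding EL_def E_def by simp }
      thus ?thesis by auto
    qed
    have ER0: "ER = {0..<4}" using ER4 h(4) unfolding nR_def by (intro card_subset_eq) auto
    have DR: "Inr -` D = {}"
    proof -
      { fix x assume xD: "Inr x \<in> D"
        hence "x < 4" using D by auto
        hence "x \<in> ER" using ER0 by simp
        hence False using xD unfolding ER_def E_def by simp }
      thus ?thesis by auto
    qed
    have "C \<union> D = {}"
    proof -
      have "C = {}" using sum_set_decomp[of C] CL CR by simp
      moreover have "D = {}" using sum_set_decomp[of D] DL DR by simp
      ultimately show ?thesis by simp
    qed
    thus False using CD by simp
  qed
  define A where "A = Amat rL nL rR nR"
  have dm: "delta_modular 2 A" unfolding A_def by (rule delta_Amat[OF r2 nL4 nR4 rn small])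
  obtain gL where gL: "bij_betw gL EL {0..<nL}" using ex_bij_betw_finite_nat[OF fEL] unfolding nL_def by blast
  obtain gR where gR: "bij_betw gR ER {0..<nR}" using ex_bij_betw_finite_nat[OF fER] unfolding nR_def by blast
  define f where "f z = (case z of Inl x \<Rightarrow> gL x | Inr y \<Rightarrow> nL + gR y)" for z
  have gLi: "inj_on gL EL" and gLr: "gL ` EL = {0..<nL}" using gL unfolding bij_betw_def by auto
  have gRi: "inj_on gR ER" and gRr: "gR ` ER = {0..<nR}" using gR unfolding bij_betw_def by auto
  have gLlt: "gL x < nL" if "x \<in> EL" for x using gLr that by auto
  have Edec: "E = Inl ` EL \<union> Inr ` ER" unfolding EL_def ER_def by (rule sum_set_decomp)
  have fimg: "f ` X = gL ` (Inl -` X) \<union> (\<lambda>y. nL + gR y) ` (Inr -` X)" for X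
  proof (intro equalityI subsetI)
    fix w assume "w \<in> f ` X"
    then obtain z where z: "z \<in> X" "w = f z" by auto
    thus "w \<in> gL ` (Inl -` X) \<union> (\<lambda>y. nL + gR y) ` (Inr -` X)" by (cases z) (auto simp: f_def)
  next
    fix w assume "w \<in> gL ` (Inl -` X) \<union> (\<lambda>y. nL + gR y) ` (Inr -` X)"
    then consider x where "Inl x \<in> X" "w = gL x" | y where "Inr y \<in> X" "w = nL + gR y" by auto
    thus "w \<in> f ` X"
    proof cases
      case (1 x) thus ?thesis by (intro image_eqI[of w f "Inl x"]) (auto simp: f_def)
    next
      case (2 y) thus ?thesis by (intro image_eqI[of w f "Inr y"]) (auto simp: f_def)
    qed
  qed
  have fL: "f ` X \<inter> {..<nL} = gL ` (Inl -` X)" if X: "X \<subseteq> E" for X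
  proof -
    have "Inl -` X \<subseteq> EL" using X unfolding EL_def by auto
    hence "gL ` (Inl -` X) \<subseteq> {..<nL}" using gLlt by auto
    thus ?thesis unfolding fimg by auto
  qed
  have fR: "f ` X \<inter> {nL..} = (\<lambda>y. nL + gR y) ` (Inr -` X)" if X: "X \<subseteq> E" for X
  proof -
    have "Inl -` X \<subseteq> EL" using X unfolding EL_def by auto
    hence h: "\<And>x. Inl x \<in> X \<Longrightarrow> gL x < nL" using gLlt by auto
    show ?thesis unfolding fimg using h by (auto simp: not_less[symmetric])
  qed
  have bij: "bij_betw f E {0..<nL+nR}"
  proof -
    have "f ` E = {0..<nL+nR}"
    proof -
      have "f ` E = gL ` EL \<union> (\<lambda>y. nL + gR y) ` ER" unfolding fimg EL_def ER_def ..
      also have "(\<lambda>y. nL + gR y) ` ER = (\<lambda>y. nL + y) ` {0..<nR}" using gRr by (auto simp: image_image[symmetric])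
      also have "\<dots> = {nL..<nL+nR}" by auto
      finally show ?thesis using gLr by auto
    qed
    moreover have "inj_on f E"
    proof (rule inj_onI)
      fix z1 z2 assume z: "z1 \<in> E" "z2 \<in> E" "f z1 = f z2"
      show "z1 = z2"
      proof (cases z1; cases z2)
        fix x1 x2 assume "z1 = Inl x1" "z2 = Inl x2"
        thus ?thesis using z gLi unfolding EL_def by (auto simp: f_def dest: inj_onD)
      next
        fix y1 y2 assume "z1 = Inr y1" "z2 = Inr y2"
        thus ?thesis using z gRi unfolding ER_def by (auto simp: f_def dest: inj_onD)
      next
        fix x1 y2 assume a: "z1 = Inl x1" "z2 = Inr y2"
        have "x1 \<in> EL" using z a unfolding EL_def by auto
        hence "gL x1 < nL" using gLlt by auto
        thus ?thesis using z a by (simp add: f_def)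
      next
        fix y1 x2 assume a: "z1 = Inr y1" "z2 = Inl x2"
        have "x2 \<in> EL" using z a unfolding EL_def by auto
        hence "gL x2 < nL" using gLlt by auto
        thus ?thesis using z a by (simp add: f_def)
      qed
    qed
    ultimately show ?thesis unfolding bij_betw_def by simp
  qed
  have ind: "indep (minor_of M0 C D) X \<longleftrightarrow> indep (vector_matroid A) (f ` X)" if X: "X \<subseteq> E" for X
  proof -
    have XL: "Inl -` X \<subseteq> EL" and XR: "Inr -` X \<subseteq> ER" using X unfolding EL_def ER_def by auto
    have sub: "f ` X \<subseteq> {0..<nL+nR}" using bij X unfolding bij_betw_def by auto
    have c1: "card (f ` X \<inter> {..<nL}) = card (Inl -` X)"
      unfolding fL[OF X] by (rule card_image, rule inj_on_subset[OF gLi XL])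
    have injR: "inj_on (\<lambda>y. nL + gR y) (Inr -` X)"
      using inj_on_subset[OF gRi XR] by (auto simp: inj_on_def)
    have c2: "card (f ` X \<inter> {nL..}) = card (Inr -` X)"
      unfolding fR[OF X] by (rule card_image[OF injR])
    have l1: "card (Inl -` X) \<le> nL" using card_mono[OF fEL XL] unfolding nL_def .
    have l2: "card (Inr -` X) \<le> nR" using card_mono[OF fER XR] unfolding nR_def .
    have "indep (vector_matroid A) (f ` X) \<longleftrightarrow> card (Inl -` X) \<le> rL \<and> card (Inr -` X) \<le> rR"
      unfolding indep_vm A_def Amat_dims using indep_Amat_card[OF sub r2 nL4 nR4] sub c1 c2 by simp
    also have "\<dots> \<longleftrightarrow> card (Inl -` X) \<le> aL \<and> card (Inr -` X) \<le> aR"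
      using l1 l2 unfolding rL_def rR_def by auto
    also have "\<dots> \<longleftrightarrow> indep (minor_of M0 C D) X"
      unfolding minor_M0(2)[OF C] aL_def aR_def using X unfolding E_def by auto
    finally show ?thesis by simp
  qed
  have "matroid_iso (minor_of M0 C D) (vector_matroid A)"
    unfolding matroid_iso_def minor_M0(1)[OF C] ground_vm A_def Amat_dims
    using bij ind unfolding E_def A_def by blast
  thus ?thesis unfolding in_M2_def using dm by blast
qed

theorem proposition4p3:
  defines "M \<equiv> direct_sum (uniform_matroid 2 4) (uniform_matroid 2 4)"
  shows "\<not> in_M2 M \<and>
    (\<forall>C D. C \<subseteq> ground M \<and> D \<subseteq> ground M \<and> C \<inter> D = {} \<and> C \<union> D \<noteq> {}
        \<longrightarrow> in_M2 (minor_of M C D))"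
  unfolding M_def using not_in_M2 minor_in_M2 ground_M0 by auto


end
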